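(* Fix an equation $(f,q,w)$ as in the context with $\prod_{i=0}^{N-1}(1/f_i)>0$. Let $\gamma\in(-\pi,0)\cup(0,\pi)$ and $K=(k_{ij})\in SL(2,\mathbb R)$ with $k_{11}-f_0k_{12}\neq0$. Let $\mathbf T_K=\begin{pmatrix}0&1&0&0\\0&0&-k_{21}&k_{11}\end{pmatrix}$. For $M\in\{K,-K\}$ with entries $m_{ij}$, write $\lambda_j(M)$, $\lambda_j(-M)$, $\lambda_j(e^{i\gamma}M)$, $\lambda_j(\mathbf T_K)$ for the eigenvalues with boundary conditions $[M|-I]$, $[-M|-I]$, $[e^{i\gamma}M|-I]$, $\mathbf T_K$; put $m_j=\min\{\lambda_j(M),\lambda_j(-M)\}$, $M_j=\max\{\lambda_j(M),\lambda_j(-M)\}$; and say $P(M)$ holds if for every $0\le j\le N-1$: $\lambda_j(M)<\lambda_j(e^{i\gamma}M)<\lambda_j(-M)$ for $j$ even and $\lambda_j(-M)<\lambda_j(e^{i\gamma}M)<\lambda_j(M)$ for $j$ odd. Then for each $M\in\{K,-K\}$: (i) if $m_{11}-f_0m_{12}>0$ and $f_0m_{11}>0$: $P(M)$ holds, $\lambda_j(\mathbf T_K)\le m_j$ for $0\le j\le N-1$, and $M_j\le\lambda_{j+1}(\mathbf T_K)$ for $0\le j\le N-2$; (ii) if $m_{11}-f_0m_{12}>0$ and $f_0m_{11}<0$: $P(M)$ holds, $M_j\le\lambda_j(\mathbf T_K)\le m_{j+1}$ for $0\le j\le N-2$, and $M_{N-1}\le\lambda_{N-1}(\mathbf T_K)$;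 (iii) if $f_0m_{12}<0$ and $m_{11}=0$: $P(M)$ holds and $M_j\le\lambda_j(\mathbf T_K)\le m_{j+1}$ for $0\le j\le N-2$.
   Context: Let $N\ge2$ be an integer. An equation is given by real sequences $f=\{f_n\}_{n=0}^N$, $q=\{q_n\}_{n=1}^N$, $w=\{w_n\}_{n=1}^N$ with $f_n\neq0$, $w_n>0$; it is $-\nabla(f_n\Delta y_n)+q_ny_n=\lambda w_ny_n$, $1\le n\le N$, for $y=\{y_n\}_{n=0}^{N+1}$, $\Delta y_n=y_{n+1}-y_n$, $\nabla y_n=y_n-y_{n-1}$. A boundary condition $[A\,|\,B]$ (equivalently the $2\times4$ coefficient matrix $(A,B)$ of rank 2) is $A(y_0,f_0\Delta y_0)^T+B(y_N,f_N\Delta y_N)^T=0$; matrices differing by left multiplication by an invertible $2\times2$ complex matrix give the same condition (so $\mathbf T_{-K}=\mathbf T_K$). $SL(2,\mathbb R)$: real $2\times2$ matrices of determinant 1; $I$ the identity. Eigenvalues ($\lambda$ with a nontrivial solution) are real; multiplicity = dimension of the solution space; counted with multiplicity they are ordered $\lambda_0\le\lambda_1\le\cdots$. *)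

theory Defs
  imports "HOL-Analysis.Analysis" "HOL-Library.Function_Algebras"
begin

definition sl_eq :: "(nat \<Rightarrow> real) \<Rightarrow> (nat \<Rightarrow> real) \<Rightarrow> (nat \<Rightarrow> real) \<Rightarrow> nat \<Rightarrow> complex \<Rightarrow> (nat \<Rightarrow> complex) \<Rightarrow> bool" where
  "sl_eq f q w N lam y \<longleftrightarrow>
     (\<forall>n\<in>{1..N}.
        - (complex_of_real (f n) * (y (Suc n) - y n) - complex_of_real (f (n - 1)) * (y n - y (n - 1)))
        + complex_of_real (q n) * y n = lam * complex_of_real (w n) * y n)"

definition col2 :: "complex \<Rightarrow> complex \<Rightarrow> complex^2" where
  "col2 a b = (\<chi> i. if i = 1 then a else b)"

definition bc_holds :: "(nat \<Rightarrow> real) \<Rightarrow> nat \<Rightarrow> complex^2^2 \<Rightarrow> complex^2^2 \<Rightarrow> (nat \<Rightarrow> complex) \<Rightarrow> bool" where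
  "bc_holds f N A B y \<longleftrightarrow>
     A *v col2 (y 0) (complex_of_real (f 0) * (y 1 - y 0))
     + B *v col2 (y N) (complex_of_real (f N) * (y (Suc N) - y N)) = 0"

definition sol_space :: "(nat \<Rightarrow> real) \<Rightarrow> (nat \<Rightarrow> real) \<Rightarrow> (nat \<Rightarrow> real) \<Rightarrow> nat \<Rightarrow> complex^2^2 \<Rightarrow> complex^2^2 \<Rightarrow> complex \<Rightarrow> (nat \<Rightarrow> complex) set" where
  "sol_space f q w N A B lam = {y. (\<forall>n>Suc N. y n = 0) \<and> sl_eq f q w N lam y \<and> bc_holds f N A B y}"

definition is_eigenvalue :: "(nat \<Rightarrow> real) \<Rightarrow> (nat \<Rightarrow> real) \<Rightarrow> (nat \<Rightarrow> real) \<Rightarrow> nat \<Rightarrow> complex^2^2 \<Rightarrow> complex^2^2 \<Rightarrow> complex \<Rightarrow> bool" where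
  "is_eigenvalue f q w N A B lam \<longleftrightarrow> (\<exists>y\<in>sol_space f q w N A B lam. y \<noteq> 0)"

definition eig_mult :: "(nat \<Rightarrow> real) \<Rightarrow> (nat \<Rightarrow> real) \<Rightarrow> (nat \<Rightarrow> real) \<Rightarrow> nat \<Rightarrow> complex^2^2 \<Rightarrow> complex^2^2 \<Rightarrow> complex \<Rightarrow> nat" where
  "eig_mult f q w N A B lam =
     vector_space.dim (\<lambda>(c::complex) (y::nat \<Rightarrow> complex). (\<lambda>n. c * y n)) (sol_space f q w N A B lam)"

definition eig_list :: "(nat \<Rightarrow> real) \<Rightarrow> (nat \<Rightarrow> real) \<Rightarrow> (nat \<Rightarrow> real) \<Rightarrow> nat \<Rightarrow> complex^2^2 \<Rightarrow> complex^2^2 \<Rightarrow> real list" where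
  "eig_list f q w N A B =
     concat (map (\<lambda>x. replicate (eig_mult f q w N A B (complex_of_real x)) x)
       (sorted_list_of_set {x::real. is_eigenvalue f q w N A B (complex_of_real x)}))"

definition eigval :: "(nat \<Rightarrow> real) \<Rightarrow> (nat \<Rightarrow> real) \<Rightarrow> (nat \<Rightarrow> real) \<Rightarrow> nat \<Rightarrow> complex^2^2 \<Rightarrow> complex^2^2 \<Rightarrow> nat \<Rightarrow> real" where
  "eigval f q w N A B j = eig_list f q w N A B ! j"

definition cmat :: "real^2^2 \<Rightarrow> complex^2^2" where
  "cmat M = (\<chi> i j. complex_of_real (M $ i $ j))"

definition cid :: "complex^2^2" where
  "cid = (\<chi> i j. if i = j then 1 else 0)"

definition phase_mat :: "real \<Rightarrow> real^2^2 \<Rightarrow> complex^2^2" where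
  "phase_mat \<gamma> M = (\<chi> i j. exp (\<i> * complex_of_real \<gamma>) * complex_of_real (M $ i $ j))"

text \<open>T_K = ( 0 1 0 0 ; 0 0 -k21 k11 ), split as [A | B].\<close>
definition TK_A :: "real^2^2 \<Rightarrow> complex^2^2" where
  "TK_A K = (\<chi> i j. if i = 1 \<and> j = 2 then 1 else 0)"

definition TK_B :: "real^2^2 \<Rightarrow> complex^2^2" where
  "TK_B K = (\<chi> i j. if i = 2 \<and> j = 1 then - complex_of_real (K $ 2 $ 1)
                   else if i = 2 \<and> j = 2 then complex_of_real (K $ 1 $ 1) else 0)"

end

theory Submission
  imports Defs "HOL-Computational_Algebra.Polynomial" "HOL-Computational_Algebra.Fundamental_Theorem_Algebra"
begin

locale slp =
  fixes f q w :: "nat \<Rightarrow> real" and N :: nat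
  assumes N2: "N \<ge> 2" and fnz: "\<forall>n\<le>N. f n \<noteq> 0" and wpos: "\<forall>n\<in>{1..N}. w n > 0"
begin

primrec st :: "real \<Rightarrow> real \<Rightarrow> nat \<Rightarrow> real poly \<times> real poly" where
  "st a b 0 = ([:a:], [:b:])"
| "st a b (Suc n) = (let y' = fst (st a b n) + smult (1 / f n) (snd (st a b n))
      in (y', snd (st a b n) + [:q (Suc n), - w (Suc n):] * y'))"

definition "Y a b n = fst (st a b n)"
definition "P a b n = snd (st a b n)"

lemma Y_0[simp]: "Y a b 0 = [:a:]" and P_0[simp]: "P a b 0 = [:b:]"
  by (simp_all add: Y_def P_def)

lemma Y_Suc: "Y a b (Suc n) = Y a b n + smult (1 / f n) (P a b n)"
  by (simp add: Y_def P_def Let_def)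

lemma P_Suc: "P a b (Suc n) = P a b n + [:q (Suc n), - w (Suc n):] * Y a b (Suc n)"
  by (simp add: Y_def P_def Let_def)

lemma det_st: "n \<le> N \<Longrightarrow> Y 1 0 n * P 0 1 n - Y 0 1 n * P 1 0 n = 1"
proof (induction n)
  case 0 then show ?case by (simp add: one_pCons)
next
  case (Suc n)
  then have IH: "Y 1 0 n * P 0 1 n - Y 0 1 n * P 1 0 n = 1" by simp
  have gen: "\<And>(y1::real poly) y2 p1 p2 e c. y1 * p2 - y2 * p1 = 1 \<Longrightarrow>
      (y1 + e * p1) * (p2 + c * (y2 + e * p2)) - (y2 + e * p2) * (p1 + c * (y1 + e * p1)) = 1"
    by algebra
  show ?case
    unfolding P_Suc[of 1 0] P_Suc[of 0 1] Y_Suc[of 1 0] Y_Suc[of 0 1]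
    using gen[OF IH, of "[:1 / f n:]" "[:q (Suc n), - w (Suc n):]"] by simp
qed

definition L :: "nat \<Rightarrow> real" where "L n = (\<Prod>k\<in>{1..<n}. - w k / f k)"

lemma coeff_st:
  "1 \<le> n \<Longrightarrow> n \<le> N \<Longrightarrow> degree (Y a b n) \<le> n - 1 \<and> coeff (Y a b n) (n - 1) = (a + b / f 0) * L n
     \<and> degree (P a b n) \<le> n \<and> coeff (P a b n) n = - w n * (a + b / f 0) * L n"
proof (induction n rule: nat_induct_at_least)
  case base
  have y1: "Y a b 1 = [:a + b / f 0:]" using Y_Suc[of a b 0] by simp
  show ?case using P_Suc[of a b 0] y1 by (simp add: L_def)
next
  case (Suc n)
  then have IH: "degree (Y a b n) \<le> n - 1" "coeff (Y a b n) (n - 1) = (a + b / f 0) * L n"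
     "degree (P a b n) \<le> n" "coeff (P a b n) n = - w n * (a + b / f 0) * L n" by auto
  have fn: "f n \<noteq> 0" using Suc fnz by auto
  have Ln: "L (Suc n) = L n * (- w n / f n)" using Suc by (simp add: L_def prod.atLeastLessThan_Suc)
  have dY: "degree (Y a b (Suc n)) \<le> n" unfolding Y_Suc
    using IH by (intro degree_add_le) (auto intro: order.trans[OF degree_smult_le])
  have cY: "coeff (Y a b (Suc n)) n = (a + b / f 0) * L (Suc n)" unfolding Y_Suc
    using IH Suc(1) by (simp add: coeff_eq_0 Ln)
  have eqm: "[:q (Suc n), - w (Suc n):] * Y a b (Suc n) = smult (q (Suc n)) (Y a b (Suc n)) + pCons 0 (smult (- w (Suc n)) (Y a b (Suc n)))"
    by (simp add: mult_pCons_left)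
  have dP: "degree (P a b (Suc n)) \<le> Suc n" unfolding P_Suc eqm
    using IH dY by (intro degree_add_le) (auto intro!: degree_add_le order.trans[OF degree_smult_le] simp: degree_pCons_le)
  have cP: "coeff (P a b (Suc n)) (Suc n) = - w (Suc n) * (a + b / f 0) * L (Suc n)"
    unfolding P_Suc eqm using IH dY by (simp add: coeff_eq_0 cY)
  show ?case using dY cY dP cP by simp
qed

end

context slp
begin

lemma pderiv_Y_Suc: "pderiv (Y a b (Suc n)) = pderiv (Y a b n) + smult (1 / f n) (pderiv (P a b n))"
  by (simp add: Y_Suc pderiv_add pderiv_smult)

lemma pderiv_P_Suc: "pderiv (P a b (Suc n)) = pderiv (P a b n) + [:q (Suc n), - w (Suc n):] * pderiv (Y a b (Suc n))
   + smult (- w (Suc n)) (Y a b (Suc n))"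
proof -
  have c: "pderiv [:q (Suc n), - w (Suc n):] = [:- w (Suc n):]" by (simp add: pderiv_pCons)
  show ?thesis
    by (simp only: P_Suc[of a b n] pderiv_add pderiv_mult c) (simp add: mult.commute)
qed

lemma W_ident:
  "poly (Y a b n) x * poly (pderiv (P c d n)) x - poly (P a b n) x * poly (pderiv (Y c d n)) x
     = - (\<Sum>k\<in>{1..n}. w k * poly (Y a b k) x * poly (Y c d k) x)"
proof (induction n)
  case 0 then show ?case by (simp add: pderiv_pCons)
next
  case (Suc n)
  define y where "y = poly (Y a b n) x"
  define p where "p = poly (P a b n) x"
  define dy where "dy = poly (pderiv (Y c d n)) x"
  define dp where "dp = poly (pderiv (P c d n)) x"
  define y2 where "y2 = poly (Y c d (Suc n)) x"
  define e where "e = 1 / f n"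
  define cc where "cc = q (Suc n) - w (Suc n) * x"
  have y1: "poly (Y a b (Suc n)) x = y + e * p" by (simp add: Y_Suc y_def p_def e_def)
  have p1: "poly (P a b (Suc n)) x = p + cc * (y + e * p)"
    unfolding y1[symmetric] by (simp add: P_Suc p_def cc_def algebra_simps)
  have dy1: "poly (pderiv (Y c d (Suc n))) x = dy + e * dp" by (simp add: pderiv_Y_Suc dy_def dp_def e_def)
  have dp1: "poly (pderiv (P c d (Suc n))) x = dp + cc * (dy + e * dp) - w (Suc n) * y2"
    by (simp add: pderiv_P_Suc dy1 cc_def y2_def dp_def algebra_simps)
  have IH: "y * dp - p * dy = - (\<Sum>k\<in>{1..n}. w k * poly (Y a b k) x * poly (Y c d k) x)"
    using Suc by (simp add: y_def p_def dy_def dp_def)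
  have "poly (Y a b (Suc n)) x * poly (pderiv (P c d (Suc n))) x - poly (P a b (Suc n)) x * poly (pderiv (Y c d (Suc n))) x
     = (y * dp - p * dy) - w (Suc n) * poly (Y a b (Suc n)) x * y2"
    unfolding y1 p1 dy1 dp1 by (simp add: algebra_simps)
  also have "\<dots> = - (\<Sum>k\<in>{1..Suc n}. w k * poly (Y a b k) x * poly (Y c d k) x)"
    using IH by (simp add: y2_def)
  finally show ?case .
qed

definition "Ap m12 m22 = smult m22 (Y 1 0 N) - smult m12 (P 1 0 N)"
definition "Bp m12 m22 = smult m22 (Y 0 1 N) - smult m12 (P 0 1 N)"
definition "Cp m11 m21 = smult m11 (P 1 0 N) - smult m21 (Y 1 0 N)"
definition "Dd m11 m21 = smult m11 (P 0 1 N) - smult m21 (Y 0 1 N)"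
definition "Dp m11 m12 m21 m22 = Ap m12 m22 + Dd m11 m21"

definition Qf :: "real \<Rightarrow> real \<Rightarrow> real \<Rightarrow> real \<Rightarrow> real \<Rightarrow> real \<Rightarrow> real" where
  "Qf a b c d \<alpha> \<beta> = b * \<alpha>^2 + (d - a) * \<alpha> * \<beta> - c * \<beta>^2"

lemma U_det: "poly (Ap m12 m22) x * poly (Dd m11 m21) x - poly (Bp m12 m22) x * poly (Cp m11 m21) x
   = m11 * m22 - m12 * m21"
proof -
  have "poly (Y 1 0 N * P 0 1 N - Y 0 1 N * P 1 0 N) x = 1" using det_st[of N] by simp
  then have d: "poly (Y 1 0 N) x * poly (P 0 1 N) x - poly (Y 0 1 N) x * poly (P 1 0 N) x = 1" by simp
  show ?thesis unfolding Ap_def Bp_def Cp_def Dd_def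
    using d by (simp add: algebra_simps)
qed

lemma D_deriv:
  "poly (pderiv (Dp m11 m12 m21 m22)) x =
    - (\<Sum>k\<in>{1..N}. w k * Qf (poly (Ap m12 m22) x) (poly (Bp m12 m22) x) (poly (Cp m11 m21) x) (poly (Dd m11 m21) x)
          (poly (Y 1 0 k) x) (poly (Y 0 1 k) x))"
proof -
  define y0 where "y0 = poly (Y 1 0 N) x"
  define y1 where "y1 = poly (Y 0 1 N) x"
  define p0 where "p0 = poly (P 1 0 N) x"
  define p1 where "p1 = poly (P 0 1 N) x"
  define dy0 where "dy0 = poly (pderiv (Y 1 0 N)) x"
  define dy1 where "dy1 = poly (pderiv (Y 0 1 N)) x"
  define dp0 where "dp0 = poly (pderiv (P 1 0 N)) x"
  define dp1 where "dp1 = poly (pderiv (P 0 1 N)) x"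
  define S00 where "S00 = (\<Sum>k\<in>{1..N}. w k * poly (Y 1 0 k) x * poly (Y 1 0 k) x)"
  define S01 where "S01 = (\<Sum>k\<in>{1..N}. w k * poly (Y 1 0 k) x * poly (Y 0 1 k) x)"
  define S11 where "S11 = (\<Sum>k\<in>{1..N}. w k * poly (Y 0 1 k) x * poly (Y 0 1 k) x)"
  have S10: "(\<Sum>k\<in>{1..N}. w k * poly (Y 0 1 k) x * poly (Y 1 0 k) x) = S01"
    unfolding S01_def by (intro sum.cong) auto
  have E1: "y0 * dp0 - p0 * dy0 = - S00" using W_ident[of 1 0 N x 1 0] by (simp add: y0_def dp0_def p0_def dy0_def S00_def)
  have E2: "y1 * dp0 - p1 * dy0 = - S01" using W_ident[of 0 1 N x 1 0] S10 by (simp add: y1_def dp0_def p1_def dy0_def)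
  have E3: "y0 * dp1 - p0 * dy1 = - S01" using W_ident[of 1 0 N x 0 1] by (simp add: y0_def dp1_def p0_def dy1_def S01_def)
  have E4: "y1 * dp1 - p1 * dy1 = - S11" using W_ident[of 0 1 N x 0 1] by (simp add: y1_def dp1_def p1_def dy1_def S11_def)
  have "poly (Y 1 0 N * P 0 1 N - Y 0 1 N * P 1 0 N) x = 1" using det_st[of N] by simp
  then have dt: "y0 * p1 - y1 * p0 = 1" by (simp add: y0_def y1_def p0_def p1_def)
  have lhs: "poly (pderiv (Dp m11 m12 m21 m22)) x = m22 * dy0 - m12 * dp0 - m21 * dy1 + m11 * dp1"
    by (simp add: Dp_def Ap_def Dd_def pderiv_add pderiv_diff pderiv_smult dy0_def dp0_def dy1_def dp1_def)
  have rhs: "(\<Sum>k\<in>{1..N}. w k * Qf a b c d (poly (Y 1 0 k) x) (poly (Y 0 1 k) x)) = b * S00 + (d - a) * S01 - c * S11"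
    for a b c d
    by (simp add: Qf_def S00_def S01_def S11_def sum_distrib_left sum_subtractf sum.distrib power2_eq_square algebra_simps)
  have key: "m22 * dy0 - m12 * dp0 - m21 * dy1 + m11 * dp1 = - ((m22 * y1 - m12 * p1) * S00 + ((m11 * p1 - m21 * y1) - (m22 * y0 - m12 * p0)) * S01
     - (m11 * p0 - m21 * y0) * S11)"
  proof -
    have a: "dy0 = y0 * S01 - y1 * S00" using E1 E2 dt by algebra
    have b: "dp0 = p0 * S01 - p1 * S00" using E1 E2 dt by algebra
    have c: "dy1 = y0 * S11 - y1 * S01" using E3 E4 dt by algebra
    have d: "dp1 = p0 * S11 - p1 * S01" using E3 E4 dt by algebra
    show ?thesis unfolding a b c d by algebra
  qed
  show ?thesis unfolding lhs rhs key
    by (simp add: Ap_def Bp_def Cp_def Dd_def y0_def y1_def p0_def p1_def)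
qed

lemma alpha1: "poly (Y 1 0 1) x = 1" and beta1: "poly (Y 0 1 1) x = 1 / f 0"
  using Y_Suc[of 1 0 0] Y_Suc[of 0 1 0] by simp_all

lemma alpha_beta_2: "poly (Y 1 0 1) x * poly (Y 0 1 2) x - poly (Y 0 1 1) x * poly (Y 1 0 2) x = 1 / f 1"
proof -
  have "poly (Y 1 0 1 * P 0 1 1 - Y 0 1 1 * P 1 0 1) x = 1" using det_st[of 1] N2 by simp
  then have d: "poly (Y 1 0 1) x * poly (P 0 1 1) x - poly (Y 0 1 1) x * poly (P 1 0 1) x = 1" by simp
  have "poly (Y 1 0 1) x * poly (Y 0 1 2) x - poly (Y 0 1 1) x * poly (Y 1 0 2) x =
     (poly (Y 1 0 1) x * poly (P 0 1 1) x - poly (Y 0 1 1) x * poly (P 1 0 1) x) / f 1"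
    using Y_Suc[of 1 0 1] Y_Suc[of 0 1 1] by (simp add: numeral_2_eq_2 algebra_simps add_divide_distrib diff_divide_distrib)
  then show ?thesis using d by simp
qed

context
  fixes m11 m12 m21 m22 :: real and x :: real
  assumes detM: "m11 * m22 - m12 * m21 = 1"
begin

definition "aa = poly (Ap m12 m22) x"
definition "bb = poly (Bp m12 m22) x"
definition "cc = poly (Cp m11 m21) x"
definition "dd = poly (Dd m11 m21) x"

lemma Dp_eval: "poly (Dp m11 m12 m21 m22) x = aa + dd"
  by (simp add: Dp_def aa_def dd_def)

lemma Udet: "aa * dd - bb * cc = 1"
  using U_det[of m12 m22 x m11 m21] detM by (simp add: aa_def bb_def cc_def dd_def)

lemma Dderiv': "poly (pderiv (Dp m11 m12 m21 m22)) x = - (\<Sum>k\<in>{1..N}. w k * Qf aa bb cc dd (poly (Y 1 0 k) x) (poly (Y 0 1 k) x))"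
  using D_deriv by (simp add: aa_def bb_def cc_def dd_def)

lemma cQ: "- 4 * cc * Qf aa bb cc dd \<alpha> \<beta> = (2 * cc * \<beta> - (dd - aa) * \<alpha>)^2 + (4 - (aa + dd)^2) * \<alpha>^2"
  using Udet unfolding Qf_def by algebra

lemma bQ: "4 * bb * Qf aa bb cc dd \<alpha> \<beta> = (2 * bb * \<alpha> + (dd - aa) * \<beta>)^2 - ((aa + dd)^2 - 4) * \<beta>^2"
  using Udet unfolding Qf_def by algebra

lemma c_zero_gap: "cc = 0 \<Longrightarrow> \<bar>aa + dd\<bar> \<ge> 2"
proof -
  assume "cc = 0"
  then have "aa * dd = 1" using Udet by simp
  then have "(aa + dd)^2 - 4 = (aa - dd)^2" by (simp add: power2_eq_square algebra_simps)
  moreover have "(aa - dd)^2 \<ge> 0" by simp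
  ultimately have "(aa + dd)^2 \<ge> 4" by linarith
  then have "(aa + dd)^2 \<ge> 2^2" by simp
  then show ?thesis using abs_le_square_iff[of 2 "aa + dd"] by simp
qed

lemma F1: assumes "\<bar>aa + dd\<bar> < 2" shows "cc * poly (pderiv (Dp m11 m12 m21 m22)) x > 0"
proof -
  have "\<bar>aa + dd\<bar> * \<bar>aa + dd\<bar> < 2 * 2" using assms by (intro mult_strict_mono) auto
  then have sq: "(aa + dd)^2 < 4" by (simp add: power2_eq_square)
  have "cc * poly (pderiv (Dp m11 m12 m21 m22)) x = (\<Sum>k\<in>{1..N}. w k * ((- 4 * cc * Qf aa bb cc dd (poly (Y 1 0 k) x) (poly (Y 0 1 k) x)) / 4))"
    unfolding Dderiv' by (simp add: sum_distrib_left sum_negf[symmetric] algebra_simps)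
  also have "\<dots> > 0"
  proof (rule sum_pos2[of _ 1])
    show "1 \<in> {1..N}" using N2 by simp
    have "w 1 > 0" using wpos N2 by auto
    moreover have "- 4 * cc * Qf aa bb cc dd (poly (Y 1 0 1) x) (poly (Y 0 1 1) x) > 0"
    proof -
      have "(2 * cc * poly (Y 0 1 1) x - (dd - aa) * 1)\<^sup>2 \<ge> 0" by simp
      then show ?thesis unfolding cQ alpha1 using sq by (intro add_nonneg_pos) auto
    qed
    ultimately show "0 < w 1 * ((- 4 * cc * Qf aa bb cc dd (poly (Y 1 0 1) x) (poly (Y 0 1 1) x)) / 4)"
      by (metis divide_pos_pos mult_pos_pos zero_less_numeral)
    show "\<And>i. i \<in> {1..N} \<Longrightarrow> 0 \<le> w i * ((- 4 * cc * Qf aa bb cc dd (poly (Y 1 0 i) x) (poly (Y 0 1 i) x)) / 4)"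
    proof -
      fix i assume i: "i \<in> {1..N}"
      then have "w i > 0" using wpos by auto
      moreover have "- 4 * cc * Qf aa bb cc dd (poly (Y 1 0 i) x) (poly (Y 0 1 i) x) \<ge> 0"
        unfolding cQ using sq by (intro add_nonneg_nonneg) auto
      ultimately show "0 \<le> w i * ((- 4 * cc * Qf aa bb cc dd (poly (Y 1 0 i) x) (poly (Y 0 1 i) x)) / 4)"
        by (metis divide_nonneg_pos mult_nonneg_nonneg less_imp_le zero_less_numeral)
    qed
  qed simp
  finally show ?thesis .
qed

lemma F2: assumes "\<bar>aa + dd\<bar> = 2" and "poly (pderiv (Dp m11 m12 m21 m22)) x = 0"
  shows "bb = 0 \<and> cc = 0 \<and> aa = dd"
proof -
  have "aa + dd = 2 \<or> aa + dd = -2" using assms(1) by auto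
  then have sq: "(aa + dd)^2 = 4" by auto
  define al where "al k = poly (Y 1 0 k) x" for k
  define be where "be k = poly (Y 0 1 k) x" for k
  have s1: "(\<Sum>k\<in>{1..N}. w k * (2 * cc * be k - (dd - aa) * al k)^2) = 0"
  proof -
    have "(\<Sum>k\<in>{1..N}. w k * (2 * cc * be k - (dd - aa) * al k)^2) = (\<Sum>k\<in>{1..N}. w k * (- 4 * cc * Qf aa bb cc dd (al k) (be k)))"
      unfolding cQ sq by simp
    also have "\<dots> = 4 * (cc * poly (pderiv (Dp m11 m12 m21 m22)) x)"
      unfolding Dderiv' al_def be_def by (simp add: sum_distrib_left sum_negf[symmetric] algebra_simps)
    finally show ?thesis using assms(2) by simp
  qed
  have nn: "\<And>k. k \<in> {1..N} \<Longrightarrow> 0 \<le> w k * (2 * cc * be k - (dd - aa) * al k)^2"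
    using wpos by (intro mult_nonneg_nonneg) (auto simp: less_imp_le)
  have t: "\<forall>k\<in>{1..N}. w k * (2 * cc * be k - (dd - aa) * al k)^2 = 0"
    using sum_nonneg_eq_0_iff[of "{1..N}" "\<lambda>k. w k * (2 * cc * be k - (dd - aa) * al k)^2"] s1 nn by simp
  have e: "2 * cc * be k - (dd - aa) * al k = 0" if "k \<in> {1..N}" for k
  proof -
    have "w k > 0" using wpos that by auto
    moreover have "w k * (2 * cc * be k - (dd - aa) * al k)^2 = 0" using t that by blast
    ultimately show ?thesis by simp
  qed
  have e1: "2 * cc * be 1 - (dd - aa) * al 1 = 0" and e2: "2 * cc * be 2 - (dd - aa) * al 2 = 0"
    using e N2 by auto
  have ab: "al 1 * be 2 - be 1 * al 2 = 1 / f 1" using alpha_beta_2 by (simp add: al_def be_def)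
  have a1: "al 1 = 1" unfolding al_def by (rule alpha1)
  have f1: "f 1 \<noteq> 0" using fnz N2 by auto
  have "2 * cc * (al 1 * be 2 - be 1 * al 2) = al 1 * (2 * cc * be 2 - (dd - aa) * al 2) - al 2 * (2 * cc * be 1 - (dd - aa) * al 1)"
    by (simp add: algebra_simps)
  then have "2 * cc * (1 / f 1) = 0" using e1 e2 ab by simp
  then have c0: "cc = 0" using f1 by simp
  then have ad: "dd = aa" using e1 a1 by simp
  have s2: "(\<Sum>k\<in>{1..N}. w k * (2 * bb * al k + (dd - aa) * be k)^2) = 0"
  proof -
    have "(\<Sum>k\<in>{1..N}. w k * (2 * bb * al k + (dd - aa) * be k)^2) = (\<Sum>k\<in>{1..N}. w k * (4 * bb * Qf aa bb cc dd (al k) (be k)))"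
      unfolding bQ sq by simp
    also have "\<dots> = - 4 * (bb * poly (pderiv (Dp m11 m12 m21 m22)) x)"
      unfolding Dderiv' al_def be_def by (simp add: sum_distrib_left sum_negf[symmetric] algebra_simps)
    finally show ?thesis using assms(2) by simp
  qed
  have nn2: "\<And>k. k \<in> {1..N} \<Longrightarrow> 0 \<le> w k * (2 * bb * al k + (dd - aa) * be k)^2"
    using wpos by (intro mult_nonneg_nonneg) (auto simp: less_imp_le)
  have "\<forall>k\<in>{1..N}. w k * (2 * bb * al k + (dd - aa) * be k)^2 = 0"
    using sum_nonneg_eq_0_iff[of "{1..N}" "\<lambda>k. w k * (2 * bb * al k + (dd - aa) * be k)^2"] s2 nn2 by simp
  then have "w 1 * (2 * bb * al 1 + (dd - aa) * be 1)^2 = 0" using N2 by auto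
  moreover have "w 1 > 0" using wpos N2 by auto
  ultimately have "bb = 0" using ad a1 by simp
  then show ?thesis using c0 ad by simp
qed

lemma F3: assumes "bb = 0" "cc = 0" "aa = dd" shows "poly (pderiv (Dp m11 m12 m21 m22)) x = 0"
  unfolding Dderiv' using assms by (simp add: Qf_def)

end

end

lemma deriv_neg_dec:
  fixes p :: "real poly"
  assumes "x < y" "\<forall>t. x < t \<and> t < y \<longrightarrow> poly (pderiv p) t < 0"
  shows "poly p y < poly p x"
proof -
  obtain t where t: "x < t" "t < y" "poly p y - poly p x = (y - x) * poly (pderiv p) t"
    using poly_MVT[OF assms(1), of p] by auto
  have "(y - x) * poly (pderiv p) t < 0" using assms t by (intro mult_pos_neg) auto
  then show ?thesis using t by simp
qed

lemma deriv_pos_inc: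
  fixes p :: "real poly"
  assumes "x < y" "\<forall>t. x < t \<and> t < y \<longrightarrow> poly (pderiv p) t > 0"
  shows "poly p x < poly p y"
proof -
  obtain t where t: "x < t" "t < y" "poly p y - poly p x = (y - x) * poly (pderiv p) t"
    using poly_MVT[OF assms(1), of p] by auto
  have "(y - x) * poly (pderiv p) t > 0" using assms t by (intro mult_pos_pos) auto
  then show ?thesis using t by simp
qed

lemma mono_piece:
  fixes p :: "real poly"
  assumes "a < b" "\<forall>x. a < x \<and> x < b \<longrightarrow> poly (pderiv p) x \<noteq> 0"
  shows "(\<forall>x. a < x \<and> x < b \<longrightarrow> poly (pderiv p) x > 0) \<or> (\<forall>x. a < x \<and> x < b \<longrightarrow> poly (pderiv p) x < 0)"
proof (rule ccontr)
  assume "\<not> ?thesis"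
  then obtain x1 x2 where x1: "a < x1" "x1 < b" "\<not> poly (pderiv p) x1 > 0"
    and x2: "a < x2" "x2 < b" "\<not> poly (pderiv p) x2 < 0" by auto
  have n1: "poly (pderiv p) x1 < 0" using x1 assms(2) by force
  have n2: "poly (pderiv p) x2 > 0" using x2 assms(2) by force
  have "x1 \<noteq> x2" using n1 n2 by auto
  then consider "x1 < x2" | "x2 < x1" by linarith
  then show False
  proof cases
    case 1
    then obtain t where "x1 < t" "t < x2" "poly (pderiv p) t = 0"
      using poly_IVT[OF 1, of "pderiv p"] n1 n2 by (auto simp: mult_neg_pos)
    then show False using assms(2) x1 x2 by auto
  next
    case 2
    then obtain t where "x2 < t" "t < x1" "poly (pderiv p) t = 0"
      using poly_IVT[OF 2, of "pderiv p"] n1 n2 by (auto simp: mult_pos_neg)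
    then show False using assms(2) x1 x2 by auto
  qed
qed

lemma piece_sign:
  fixes p :: "real poly"
  assumes "a < b" "\<forall>x. a < x \<and> x < b \<longrightarrow> poly (pderiv p) x \<noteq> 0"
    and "a \<le> u" "u < v" "v \<le> b"
  shows "((\<forall>x. a < x \<and> x < b \<longrightarrow> poly (pderiv p) x > 0) \<and> poly p u < poly p v)
       \<or> ((\<forall>x. a < x \<and> x < b \<longrightarrow> poly (pderiv p) x < 0) \<and> poly p v < poly p u)"
proof -
  from mono_piece[OF assms(1,2)] show ?thesis
  proof
    assume h: "\<forall>x. a < x \<and> x < b \<longrightarrow> poly (pderiv p) x > 0"
    then have "poly p u < poly p v" using assms by (intro deriv_pos_inc) auto
    then show ?thesis using h by auto
  next
    assume h: "\<forall>x. a < x \<and> x < b \<longrightarrow> poly (pderiv p) x < 0"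
    then have "poly p v < poly p u" using assms by (intro deriv_neg_dec) auto
    then show ?thesis using h by auto
  qed
qed

lemma zigzag:
  fixes p :: "real poly" and N :: nat
  assumes N1: "N \<ge> 1" and deg: "degree p = N"
    and roots: "card {x. poly p x = 0} = N"
    and crit: "\<forall>x. \<bar>poly p x\<bar> < 2 \<longrightarrow> poly (pderiv p) x \<noteq> 0"
    and ninf: "\<exists>R. \<forall>x\<le>R. poly p x > 2"
    and pinf: "\<exists>R. \<forall>x\<ge>R. \<bar>poly p x\<bar> > 2"
  shows "\<exists>\<xi>::nat\<Rightarrow>real. (\<forall>k<N. \<xi> k < \<xi> (Suc k))
     \<and> (\<forall>k<N. \<forall>x. \<xi> k < x \<and> x < \<xi> (Suc k) \<longrightarrow> (if even k then poly (pderiv p) x < 0 else poly (pderiv p) x > 0))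
     \<and> (\<forall>k\<in>{1..<N}. poly (pderiv p) (\<xi> k) = 0)
     \<and> (\<forall>k\<le>N. if even k then poly p (\<xi> k) \<ge> 2 else poly p (\<xi> k) \<le> -2)
     \<and> poly p (\<xi> 0) > 2 \<and> \<bar>poly p (\<xi> N)\<bar> > 2
     \<and> (\<forall>x. \<bar>poly p x\<bar> \<le> 2 \<longrightarrow> \<xi> 0 < x \<and> x < \<xi> N)
     \<and> (\<forall>x. poly (pderiv p) x = 0 \<longrightarrow> (\<exists>k\<in>{1..<N}. x = \<xi> k))"
proof -
  have p0: "p \<noteq> 0" using deg N1 by auto
  define S where "S = {x. poly p x = 0}"
  have finS: "finite S" unfolding S_def using poly_roots_finite[OF p0] .
  define zl where "zl = sorted_list_of_set S"
  define z where "z k = zl ! k" for k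
  have lz: "length zl = N" using roots finS by (simp add: zl_def S_def)
  have szl: "sorted_wrt (<) zl" by (simp add: zl_def)
  have zmono: "z i < z j" if "i < j" "j < N" for i j
    using sorted_wrt_nth_less[OF szl that(1)] that lz by (simp add: z_def)
  have zroot: "poly p (z k) = 0" if "k < N" for k
  proof -
    have "z k \<in> set zl" using that lz by (simp add: z_def)
    then show ?thesis using finS by (simp add: zl_def S_def)
  qed
  have "\<forall>k\<in>{1..<N}. \<exists>t. z (k - 1) < t \<and> t < z k \<and> poly (pderiv p) t = 0"
  proof
    fix k assume k: "k \<in> {1..<N}"
    have lt: "z (k - 1) < z k" using k by (intro zmono) auto
    obtain t where "z (k - 1) < t" "t < z k" "poly p (z k) - poly p (z (k - 1)) = (z k - z (k - 1)) * poly (pderiv p) t"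
      using poly_MVT[OF lt, of p] by auto
    moreover have "poly p (z k) = 0" "poly p (z (k - 1)) = 0" using k by (auto intro: zroot)
    ultimately show "\<exists>t. z (k - 1) < t \<and> t < z k \<and> poly (pderiv p) t = 0" using lt by auto
  qed
  then obtain c where c: "\<And>k. k \<in> {1..<N} \<Longrightarrow> z (k - 1) < c k \<and> c k < z k \<and> poly (pderiv p) (c k) = 0"
    by metis
  have cmono: "c i < c j" if "i < j" "i \<in> {1..<N}" "j \<in> {1..<N}" for i j
  proof -
    have "c i < z i" using c that by auto
    also have "z i \<le> z (j - 1)" using that zmono by (cases "i = j - 1") (auto intro: less_imp_le)
    also have "z (j - 1) < c j" using c that by auto
    finally show ?thesis .
  qed
  have dp0: "pderiv p \<noteq> 0" using deg N1 by (simp add: pderiv_eq_0_iff)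
  define C where "C = {x. poly (pderiv p) x = 0}"
  have finC: "finite C" unfolding C_def using poly_roots_finite[OF dp0] .
  have cardC: "card C \<le> N - 1" unfolding C_def using card_poly_roots_bound[OF dp0] deg by (simp add: degree_pderiv)
  have injc: "inj_on c {1..<N}"
    by (rule inj_onI) (metis cmono less_irrefl nat_neq_iff)
  have sub: "c ` {1..<N} \<subseteq> C" using c by (auto simp: C_def)
  have "card (c ` {1..<N}) = N - 1" using card_image[OF injc] by simp
  then have Ceq: "c ` {1..<N} = C" using card_subset_eq[OF finC sub] cardC
    by (metis card_mono finC le_antisym sub)
  obtain R1 where R1: "\<forall>x\<le>R1. poly p x > 2" using ninf by auto
  obtain R2 where R2: "\<forall>x\<ge>R2. \<bar>poly p x\<bar> > 2" using pinf by auto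
  define \<xi> where "\<xi> k = (if k = 0 then min R1 (z 0 - 1) else if k = N then max R2 (z (N - 1) + 1) else c k)" for k
  have zin: "\<xi> k < z k \<and> z k < \<xi> (Suc k)" if "k < N" for k
  proof
    show "\<xi> k < z k"
    proof (cases "k = 0")
      case True then show ?thesis by (simp add: \<xi>_def)
    next
      case False then show ?thesis using c[of k] that by (simp add: \<xi>_def)
    qed
    show "z k < \<xi> (Suc k)"
    proof (cases "Suc k = N")
      case True then have "N - 1 = k" by simp
      with True show ?thesis by (simp add: \<xi>_def)
    next
      case False then show ?thesis using c[of "Suc k"] that by (simp add: \<xi>_def)
    qed
  qed
  have xinc: "\<xi> k < \<xi> (Suc k)" if "k < N" for k using zin[OF that] by simp
  have xmono: "\<xi> i < \<xi> j" if "i < j" "j \<le> N" for i j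
    using that
  proof (induction j)
    case 0 then show ?case by simp
  next
    case (Suc j)
    show ?case
    proof (cases "i = j")
      case True then show ?thesis using xinc Suc by simp
    next
      case False then have "\<xi> i < \<xi> j" using Suc by simp
      also have "\<xi> j < \<xi> (Suc j)" using xinc Suc by simp
      finally show ?thesis .
    qed
  qed
  have xmono_le: "\<xi> i \<le> \<xi> j" if "i \<le> j" "j \<le> N" for i j
    using xmono[of i j] that by (cases "i = j") auto
  have Cxi: "poly (pderiv p) x = 0 \<Longrightarrow> \<exists>k\<in>{1..<N}. x = \<xi> k" for x
  proof -
    assume "poly (pderiv p) x = 0"
    then have "x \<in> c ` {1..<N}" using Ceq by (simp add: C_def)
    then show ?thesis by (auto simp: \<xi>_def)
  qed
  have nocrit: "poly (pderiv p) x \<noteq> 0" if "k < N" "\<xi> k < x" "x < \<xi> (Suc k)" for k x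
  proof
    assume "poly (pderiv p) x = 0"
    then obtain j where j: "j \<in> {1..<N}" "x = \<xi> j" using Cxi by blast
    show False
    proof (cases "j \<le> k")
      case True then show False using xmono_le[of j k] that j by auto
    next
      case False then show False using xmono_le[of "Suc k" j] that j by auto
    qed
  qed
  have sgn: "\<forall>x. \<xi> k < x \<and> x < \<xi> (Suc k) \<longrightarrow> (if even k then poly (pderiv p) x < 0 else poly (pderiv p) x > 0)"
    if "k < N" for k
    using that
  proof (induction k)
    case 0
    have R: "poly p (\<xi> 0) > 2" using R1 by (simp add: \<xi>_def)
    have "poly p (z 0) = 0" using 0 by (intro zroot)
    then show ?case using piece_sign[OF xinc[OF 0] _ order.refl, of p "z 0"] nocrit[of 0] zin[OF 0] R 0
      by force
  next
    case (Suc k)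
    have k: "k < N" using Suc by simp
    have IH: "\<forall>x. \<xi> k < x \<and> x < \<xi> (Suc k) \<longrightarrow> (if even k then poly (pderiv p) x < 0 else poly (pderiv p) x > 0)"
      using Suc k by simp
    have zr1: "poly p (z k) = 0" "poly p (z (Suc k)) = 0" using Suc by (auto intro: zroot)
    have A: "(if even k then poly p (\<xi> (Suc k)) < 0 else poly p (\<xi> (Suc k)) > 0)"
    proof (cases "even k")
      case True
      then have "poly p (\<xi> (Suc k)) < poly p (z k)"
        using IH zin[OF k] by (intro deriv_neg_dec) auto
      then show ?thesis using True zr1 by simp
    next
      case False
      then have "poly p (z k) < poly p (\<xi> (Suc k))"
        using IH zin[OF k] by (intro deriv_pos_inc) auto
      then show ?thesis using False zr1 by simp
    qed
    have nc: "\<forall>x. \<xi> (Suc k) < x \<and> x < \<xi> (Suc (Suc k)) \<longrightarrow> poly (pderiv p) x \<noteq> 0"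
      using nocrit[of "Suc k"] Suc by auto
    have zs: "\<xi> (Suc k) < z (Suc k)" "z (Suc k) < \<xi> (Suc (Suc k))" using zin[of "Suc k"] Suc by auto
    from piece_sign[OF xinc[of "Suc k"] nc order.refl zs(1) less_imp_le[OF zs(2)]] Suc(2)
    show ?case using A zr1 by (auto split: if_splits)
  qed
  have val: "if even k then poly p (\<xi> k) \<ge> 2 else poly p (\<xi> k) \<le> -2" if "k \<le> N" for k
  proof (cases "k = 0")
    case True
    have "min R1 (z 0 - 1) \<le> R1" by simp
    then have "poly p (min R1 (z 0 - 1)) > 2" using R1 by blast
    then show ?thesis using True by (simp add: \<xi>_def)
  next
    case False
    then have k1: "k - 1 < N" "Suc (k - 1) = k" using that by auto
    have S: "\<forall>x. \<xi> (k - 1) < x \<and> x < \<xi> k \<longrightarrow> (if even (k - 1) then poly (pderiv p) x < 0 else poly (pderiv p) x > 0)"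
      using sgn[OF k1(1)] k1(2) by simp
    have zk: "z (k - 1) < \<xi> k" using zin[OF k1(1)] k1(2) by simp
    have zk': "\<xi> (k - 1) < z (k - 1)" using zin[OF k1(1)] by simp
    have zr: "poly p (z (k - 1)) = 0" using k1 by (intro zroot)
    have sg: "if even (k - 1) then poly p (\<xi> k) < 0 else poly p (\<xi> k) > 0"
    proof (cases "even (k - 1)")
      case True
      then have "poly p (\<xi> k) < poly p (z (k - 1))" using S zk zk' by (intro deriv_neg_dec) auto
      then show ?thesis using True zr by simp
    next
      case False
      then have "poly p (z (k - 1)) < poly p (\<xi> k)" using S zk zk' by (intro deriv_pos_inc) auto
      then show ?thesis using False zr by simp
    qed
    have big: "\<bar>poly p (\<xi> k)\<bar> \<ge> 2"
    proof (cases "k = N")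
      case True
      have "max R2 (z (N - 1) + 1) \<ge> R2" by simp
      then have "\<bar>poly p (max R2 (z (N - 1) + 1))\<bar> > 2" using R2 by blast
      then show ?thesis using True N1 by (simp add: \<xi>_def)
    next
      case False
      then have "k \<in> {1..<N}" using that \<open>k \<noteq> 0\<close> by auto
      then have "poly (pderiv p) (\<xi> k) = 0" using c by (simp add: \<xi>_def)
      then show ?thesis using crit by force
    qed
    have "even k \<longleftrightarrow> \<not> even (k - 1)" using \<open>k \<noteq> 0\<close> by (cases k) auto
    then show ?thesis using sg big by (auto split: if_splits)
  qed
  have out: "\<xi> 0 < x \<and> x < \<xi> N" if "\<bar>poly p x\<bar> \<le> 2" for x
  proof
    show "\<xi> 0 < x"
    proof (rule ccontr)
      assume "\<not> \<xi> 0 < x"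
      then have "x \<le> R1" by (simp add: \<xi>_def)
      then show False using R1 that by force
    qed
    show "x < \<xi> N"
    proof (rule ccontr)
      assume "\<not> x < \<xi> N"
      then have "x \<ge> R2" using N1 by (simp add: \<xi>_def)
      then show False using R2 that by force
    qed
  qed
  have e0: "poly p (\<xi> 0) > 2" using R1 by (simp add: \<xi>_def min_le_iff_disj)
  have eN: "\<bar>poly p (\<xi> N)\<bar> > 2" using R2 N1 by (simp add: \<xi>_def)
  have cr: "\<forall>k\<in>{1..<N}. poly (pderiv p) (\<xi> k) = 0" using c by (simp add: \<xi>_def)
  show ?thesis
    apply (rule exI[of _ \<xi>])
    using xinc sgn cr val e0 eN out Cxi by blast
qed


locale zz =
  fixes p :: "real poly" and N :: nat and \<xi> :: "nat \<Rightarrow> real"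
  assumes N1: "N \<ge> 1"
    and xinc: "\<forall>k<N. \<xi> k < \<xi> (Suc k)"
    and sgn: "\<forall>k<N. \<forall>x. \<xi> k < x \<and> x < \<xi> (Suc k) \<longrightarrow> (if even k then poly (pderiv p) x < 0 else poly (pderiv p) x > 0)"
    and crit: "\<forall>k\<in>{1..<N}. poly (pderiv p) (\<xi> k) = 0"
    and val: "\<forall>k\<le>N. if even k then poly p (\<xi> k) \<ge> 2 else poly p (\<xi> k) \<le> -2"
    and e0: "poly p (\<xi> 0) > 2" and eN: "\<bar>poly p (\<xi> N)\<bar> > 2"
    and out: "\<forall>x. \<bar>poly p x\<bar> \<le> 2 \<longrightarrow> \<xi> 0 < x \<and> x < \<xi> N"
    and Cxi: "\<forall>x. poly (pderiv p) x = 0 \<longrightarrow> (\<exists>k\<in>{1..<N}. x = \<xi> k)"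
begin

lemma xmono: "i < j \<Longrightarrow> j \<le> N \<Longrightarrow> \<xi> i < \<xi> j"
proof (induction j)
  case 0 then show ?case by simp
next
  case (Suc j)
  show ?case
  proof (cases "i = j")
    case True then show ?thesis using xinc Suc by simp
  next
    case False then have "\<xi> i < \<xi> j" using Suc by simp
    also have "\<xi> j < \<xi> (Suc j)" using xinc Suc by simp
    finally show ?thesis .
  qed
qed

lemma xmono_le: "i \<le> j \<Longrightarrow> j \<le> N \<Longrightarrow> \<xi> i \<le> \<xi> j"
  using xmono[of i j] by (cases "i = j") auto

lemma xmono_iff: "i \<le> N \<Longrightarrow> j \<le> N \<Longrightarrow> \<xi> i < \<xi> j \<longleftrightarrow> i < j"
  using xmono[of i j] xmono_le[of j i] by (cases "i < j") auto

lemma xi_inj: "i \<le> N \<Longrightarrow> j \<le> N \<Longrightarrow> \<xi> i = \<xi> j \<longleftrightarrow> i = j"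
  using xmono[of i j] xmono[of j i] by (metis less_irrefl nat_neq_iff)

lemma piece_mono:
  assumes k: "k < N" and "\<xi> k \<le> x" "x < y" "y \<le> \<xi> (Suc k)"
  shows "if even k then poly p y < poly p x else poly p x < poly p y"
proof (cases "even k")
  case True
  have "poly p y < poly p x" using sgn k assms True by (intro deriv_neg_dec) auto
  then show ?thesis using True by simp
next
  case False
  have "poly p x < poly p y" using sgn k assms False by (intro deriv_pos_inc) auto
  then show ?thesis using False by simp
qed

lemma piece_range:
  assumes k: "k < N" and c: "\<bar>c\<bar> \<le> 2"
  shows "\<exists>x. \<xi> k \<le> x \<and> x \<le> \<xi> (Suc k) \<and> poly p x = c"
proof -
  have v1: "if even k then poly p (\<xi> k) \<ge> 2 else poly p (\<xi> k) \<le> -2" using val k by simp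
  have v2: "if even (Suc k) then poly p (\<xi> (Suc k)) \<ge> 2 else poly p (\<xi> (Suc k)) \<le> -2" using val k by simp
  have le: "\<xi> k \<le> \<xi> (Suc k)" using xinc k by (simp add: less_imp_le)
  have cont: "\<forall>x. \<xi> k \<le> x \<and> x \<le> \<xi> (Suc k) \<longrightarrow> isCont (poly p) x" by simp
  show ?thesis
  proof (cases "even k")
    case True
    then have "poly p (\<xi> (Suc k)) \<le> c" "c \<le> poly p (\<xi> k)" using v1 v2 c by auto
    then show ?thesis using IVT2[of "poly p" "\<xi> (Suc k)" c "\<xi> k", OF _ _ le cont] by auto
  next
    case False
    then have "poly p (\<xi> k) \<le> c" "c \<le> poly p (\<xi> (Suc k))" using v1 v2 c by auto
    then show ?thesis using IVT[of "poly p" "\<xi> k" c "\<xi> (Suc k)", OF _ _ le cont] by auto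
  qed
qed

lemma piece_unique:
  assumes k: "k < N" and "\<xi> k \<le> x" "x \<le> \<xi> (Suc k)" "\<xi> k \<le> y" "y \<le> \<xi> (Suc k)" "poly p x = poly p y"
  shows "x = y"
proof (rule ccontr)
  assume "x \<noteq> y"
  then consider "x < y" | "y < x" by linarith
  then show False
  proof cases
    case 1 then show False using piece_mono[OF k assms(2) 1 assms(5)] assms(6) by (auto split: if_splits)
  next
    case 2 then show False using piece_mono[OF k assms(4) 2 assms(3)] assms(6) by (auto split: if_splits)
  qed
qed

definition rho :: "nat \<Rightarrow> real \<Rightarrow> real" where
  "rho k c = (THE x. \<xi> k \<le> x \<and> x \<le> \<xi> (Suc k) \<and> poly p x = c)"

lemma rho: assumes "k < N" "\<bar>c\<bar> \<le> 2"
  shows "\<xi> k \<le> rho k c" "rho k c \<le> \<xi> (Suc k)" "poly p (rho k c) = c"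
proof -
  obtain x where x: "\<xi> k \<le> x \<and> x \<le> \<xi> (Suc k) \<and> poly p x = c" using piece_range[OF assms] by blast
  have "rho k c = x" unfolding rho_def
    using x piece_unique[OF assms(1)] by (intro the_equality) auto
  then show "\<xi> k \<le> rho k c" "rho k c \<le> \<xi> (Suc k)" "poly p (rho k c) = c" using x by auto
qed

lemma rho_eq: assumes "k < N" "\<bar>c\<bar> \<le> 2" "\<xi> k \<le> x" "x \<le> \<xi> (Suc k)" "poly p x = c"
  shows "rho k c = x"
  using piece_unique[OF assms(1) rho(1,2)[OF assms(1,2)] assms(3,4)] rho(3)[OF assms(1,2)] assms(5) by simp

lemma rho_strict: assumes "k < N" "\<bar>c\<bar> < 2"
  shows "\<xi> k < rho k c" "rho k c < \<xi> (Suc k)"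
proof -
  have c: "\<bar>c\<bar> \<le> 2" using assms by simp
  have v1: "\<bar>poly p (\<xi> k)\<bar> \<ge> 2" using val assms(1) by (cases "even k") (auto dest!: spec[of _ k])
  have v2: "\<bar>poly p (\<xi> (Suc k))\<bar> \<ge> 2" using val assms(1) by (cases "even (Suc k)") (auto dest!: spec[of _ "Suc k"])
  have "rho k c \<noteq> \<xi> k" using rho(3)[OF assms(1) c] v1 assms(2) by auto
  then show "\<xi> k < rho k c" using rho(1)[OF assms(1) c] by simp
  have "rho k c \<noteq> \<xi> (Suc k)" using rho(3)[OF assms(1) c] v2 assms(2) by auto
  then show "rho k c < \<xi> (Suc k)" using rho(2)[OF assms(1) c] by simp
qed

lemma rho_anti: assumes "k < N" "\<bar>c1\<bar> \<le> 2" "\<bar>c2\<bar> \<le> 2" "c1 < c2"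
  shows "if even k then rho k c2 < rho k c1 else rho k c1 < rho k c2"
proof -
  note r1 = rho[OF assms(1,2)] and r2 = rho[OF assms(1,3)]
  have ne: "rho k c1 \<noteq> rho k c2" using r1(3) r2(3) assms(4) by auto
  then consider "rho k c1 < rho k c2" | "rho k c2 < rho k c1" by linarith
  then show ?thesis
  proof cases
    case 1
    then show ?thesis using piece_mono[OF assms(1) r1(1) 1 r2(2)] r1(3) r2(3) assms(4) by (auto split: if_splits)
  next
    case 2
    then show ?thesis using piece_mono[OF assms(1) r2(1) 2 r1(2)] r1(3) r2(3) assms(4) by (auto split: if_splits)
  qed
qed

lemma rho_sorted: assumes "Suc k < N" "\<bar>c\<bar> \<le> 2" shows "rho k c \<le> rho (Suc k) c"
  using rho(2)[of k c] rho(1)[of "Suc k" c] assms by force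

lemma rho_all: assumes "\<bar>c\<bar> \<le> 2" "poly p x = c" shows "\<exists>k<N. rho k c = x"
proof -
  have x: "\<xi> 0 < x" "x < \<xi> N" using out assms by auto
  define k where "k = (GREATEST k. k \<le> N \<and> \<xi> k \<le> x)"
  have ex: "0 \<le> N \<and> \<xi> 0 \<le> x" using x by simp
  have kp: "k \<le> N \<and> \<xi> k \<le> x" unfolding k_def
    by (rule GreatestI_nat[where k=0 and b=N]) (use ex in auto)
  have kmax: "\<And>j. j \<le> N \<and> \<xi> j \<le> x \<Longrightarrow> j \<le> k" unfolding k_def
    by (rule Greatest_le_nat[where b=N]) auto
  have kN: "k < N" using kp x by (metis le_neq_implies_less not_le)
  have "x \<le> \<xi> (Suc k)"
  proof (rule ccontr)
    assume "\<not> x \<le> \<xi> (Suc k)"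
    then have "Suc k \<le> k" using kmax[of "Suc k"] kN by auto
    then show False by simp
  qed
  then have "rho k c = x" using rho_eq[OF kN assms(1)] kp assms(2) by simp
  then show ?thesis using kN by blast
qed

lemma in_piece_cmp:
  assumes k: "k < N" and c: "\<bar>c\<bar> \<le> 2" and x: "\<xi> k \<le> x" "x \<le> \<xi> (Suc k)"
  shows "x \<le> rho k c \<longleftrightarrow> (if even k then poly p x \<ge> c else poly p x \<le> c)"
proof -
  note r = rho[OF k c]
  show ?thesis
  proof (cases "x = rho k c")
    case True then show ?thesis using r by simp
  next
    case False
    then consider "x < rho k c" | "rho k c < x" by linarith
    then show ?thesis
    proof cases
      case 1 then show ?thesis using piece_mono[OF k x(1) 1 r(2)] r(3) by (auto split: if_splits)
    next
      case 2 then show ?thesis using piece_mono[OF k r(1) 2 x(2)] r(3) by (auto split: if_splits)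
    qed
  qed
qed

lemma card_rho:
  assumes c: "\<bar>c\<bar> \<le> 2" and px: "poly p x = c"
  shows "card {k. k < N \<and> rho k c = x} = (if poly (pderiv p) x = 0 then 2 else 1)"
proof -
  have x: "\<xi> 0 < x" "x < \<xi> N" using out c px by auto
  show ?thesis
  proof (cases "poly (pderiv p) x = 0")
    case True
    then obtain i where i: "i \<in> {1..<N}" "x = \<xi> i" using Cxi by blast
    have si: "Suc (i - 1) = i" using i by auto
    have "i - 1 < N" using i by auto
    then have "\<xi> (i - 1) < \<xi> (Suc (i - 1))" using xinc by blast
    then have "\<xi> (i - 1) \<le> \<xi> i" using si by simp
    then have a: "rho (i - 1) c = x" using i c px si by (intro rho_eq) auto
    have b: "rho i c = x" using i c px xinc by (intro rho_eq) (auto simp: less_imp_le)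
    have "{k. k < N \<and> rho k c = x} = {i - 1, i}"
    proof (intro equalityI subsetI)
      fix k assume k: "k \<in> {k. k < N \<and> rho k c = x}"
      then have "\<xi> k \<le> \<xi> i" "\<xi> i \<le> \<xi> (Suc k)" using rho[of k c] c i by auto
      then have "k \<le> i" "i \<le> Suc k" using xmono_iff[of i k] xmono_iff[of "Suc k" i] k i by (auto simp: not_less[symmetric])
      then show "k \<in> {i - 1, i}" by auto
    next
      fix k assume "k \<in> {i - 1, i}"
      then show "k \<in> {k. k < N \<and> rho k c = x}" using a b i by auto
    qed
    moreover have "i - 1 \<noteq> i" using i by auto
    ultimately show ?thesis using True by simp
  next
    case False
    obtain k where k: "k < N" "rho k c = x" using rho_all[OF c px] by blast
    have notxi: "x \<noteq> \<xi> j" if "j \<le> N" for j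
    proof
      assume xj: "x = \<xi> j"
      then have "j \<noteq> 0" "j \<noteq> N" using x by (metis less_irrefl)+
      then have "j \<in> {1..<N}" using that by auto
      then show False using crit False xj by auto
    qed
    have "{k. k < N \<and> rho k c = x} = {k}"
    proof (intro equalityI subsetI)
      fix j assume j: "j \<in> {k. k < N \<and> rho k c = x}"
      have n1: "x \<noteq> \<xi> k" using notxi[of k] k by simp
      have n2: "x \<noteq> \<xi> (Suc k)" using notxi[of "Suc k"] k by simp
      have xk: "\<xi> k < x" "x < \<xi> (Suc k)" using rho[of k c] k c n1 n2 by (auto simp: order_le_less)
      have xj: "\<xi> j \<le> x" "x \<le> \<xi> (Suc j)" using rho[of j c] j c by auto
      have jN: "j < N" using j by simp
      have "j \<le> k"
      proof (rule ccontr)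
        assume "\<not> j \<le> k"
        then have "\<xi> (Suc k) \<le> \<xi> j" using jN by (intro xmono_le) auto
        then show False using xk xj by linarith
      qed
      moreover have "k \<le> j"
      proof (rule ccontr)
        assume "\<not> k \<le> j"
        then have "\<xi> (Suc j) \<le> \<xi> k" using k by (intro xmono_le) auto
        then show False using xk xj by linarith
      qed
      ultimately show "j \<in> {k}" by simp
    next
      fix j assume "j \<in> {k}" then show "j \<in> {k. k < N \<and> rho k c = x}" using k by auto
    qed
    then show ?thesis using False by simp
  qed
qed

end


lemma count_map_upt: "count (mset (map g [0..<n])) x = card {k. k < n \<and> g k = x}"
proof (induction n)
  case 0 then show ?case by simp
next
  case (Suc n)
  have "{k. k < Suc n \<and> g k = x} = (if g n = x then insert n {k. k < n \<and> g k = x} else {k. k < n \<and> g k = x})"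
    by (auto simp: less_Suc_eq)
  then show ?case using Suc by auto
qed

lemma count_concat_rep: "distinct xs \<Longrightarrow>
   count (mset (concat (map (\<lambda>x. replicate (m x) x) xs))) y = (if y \<in> set xs then m y else 0)"
  by (induction xs) auto

lemma sorted_concat_rep: "sorted xs \<Longrightarrow> sorted (concat (map (\<lambda>x. replicate (m x) (x::real)) xs))"
proof (induction xs)
  case Nil then show ?case by simp
next
  case (Cons a xs)
  then show ?case by (auto simp: sorted_append)
qed

lemma eig_list_generic:
  fixes L :: "real list"
  assumes "sorted L" "{x. E x} = set L" "\<forall>x\<in>set L. m x = count (mset L) x"
  shows "concat (map (\<lambda>x. replicate (m x) x) (sorted_list_of_set {x. E x})) = L"
proof -
  define R where "R = concat (map (\<lambda>x. replicate (m x) x) (sorted_list_of_set {x. E x}))"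
  have sR: "sorted R" unfolding R_def by (intro sorted_concat_rep) simp
  have "mset R = mset L"
  proof (rule multiset_eqI)
    fix y
    have "count (mset R) y = (if y \<in> set L then m y else 0)"
      unfolding R_def using assms(2) by (subst count_concat_rep) auto
    also have "\<dots> = count (mset L) y" using assms(3) by (auto simp: count_eq_zero_iff)
    finally show "count (mset R) y = count (mset L) y" .
  qed
  then have "sort L = R" using sR by (intro properties_for_sort) auto
  moreover have "sort L = L" using assms(1) by (simp add: sorted_sort_id)
  ultimately show ?thesis unfolding R_def by simp
qed


definition ev :: "real poly \<Rightarrow> complex \<Rightarrow> complex" where
  "ev p z = poly (map_poly complex_of_real p) z"

lemma mpr_add: "map_poly complex_of_real (p + q) = map_poly of_real p + map_poly of_real q"
  by (rule poly_eqI) (simp add: coeff_map_poly)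
lemma mpr_diff: "map_poly complex_of_real (p - q) = map_poly of_real p - map_poly of_real q"
  by (rule poly_eqI) (simp add: coeff_map_poly)
lemma mpr_smult: "map_poly complex_of_real (smult a p) = smult (of_real a) (map_poly of_real p)"
  by (rule poly_eqI) (simp add: coeff_map_poly)
lemma mpr_mult: "map_poly complex_of_real (p * q) = map_poly of_real p * map_poly of_real q"
  by (rule poly_eqI) (simp add: coeff_map_poly coeff_mult of_real_sum)
lemma mpr_pderiv: "map_poly complex_of_real (pderiv p) = pderiv (map_poly of_real p)"
  by (rule poly_eqI) (simp add: coeff_map_poly coeff_pderiv)

lemma ev_add: "ev (p + q) z = ev p z + ev q z" by (simp add: ev_def mpr_add)
lemma ev_diff: "ev (p - q) z = ev p z - ev q z" by (simp add: ev_def mpr_diff)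
lemma ev_smult: "ev (smult a p) z = of_real a * ev p z" by (simp add: ev_def mpr_smult)
lemma ev_mult: "ev (p * q) z = ev p z * ev q z" by (simp add: ev_def mpr_mult)
lemma ev_const: "ev [:a:] z = of_real a" by (simp add: ev_def map_poly_pCons)
lemma ev_zero[simp]: "ev 0 z = 0" by (simp add: ev_def)
lemma ev_lin: "ev [:a, b:] z = of_real a + of_real b * z" by (simp add: ev_def map_poly_pCons)
lemma ev_real: "ev p (of_real x) = of_real (poly p x)"
  unfolding ev_def by (induction p) (auto simp: map_poly_pCons)
lemma ev_pderiv_real: "poly (pderiv (map_poly complex_of_real p)) (of_real x) = of_real (poly (pderiv p) x)"
  by (simp add: mpr_pderiv[symmetric] ev_real[unfolded ev_def])

lemma col2_eq: "col2 a b = col2 c d \<longleftrightarrow> a = c \<and> b = d"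
  by (auto simp: col2_def vec_eq_iff forall_2)

lemma mat_col2: "(C::complex^2^2) *v col2 a b = col2 (C$1$1 * a + C$1$2 * b) (C$2$1 * a + C$2$2 * b)"
  by (simp add: col2_def vec_eq_iff forall_2 matrix_vector_mult_def sum_2)

lemma col2_zero: "col2 a b = 0 \<longleftrightarrow> a = 0 \<and> b = 0"
  by (auto simp: col2_def vec_eq_iff forall_2)

context slp
begin

definition "yv a b z n = a * ev (Y 1 0 n) z + b * ev (Y 0 1 n) z"
definition "pv a b z n = a * ev (P 1 0 n) z + b * ev (P 0 1 n) z"

lemma yv_0[simp]: "yv a b z 0 = a" and pv_0[simp]: "pv a b z 0 = b"
  by (simp_all add: yv_def pv_def ev_const)

lemma yv_Suc: "yv a b z (Suc n) = yv a b z n + pv a b z n / of_real (f n)"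
  by (simp add: yv_def pv_def Y_Suc ev_add ev_smult algebra_simps add_divide_distrib)

lemma pv_Suc: "pv a b z (Suc n) = pv a b z n + (of_real (q (Suc n)) - z * of_real (w (Suc n))) * yv a b z (Suc n)"
  unfolding pv_def yv_def P_Suc[of 1 0] P_Suc[of 0 1] ev_add ev_mult ev_lin
  by (simp add: algebra_simps)

definition Ls :: "complex \<Rightarrow> complex \<Rightarrow> complex \<Rightarrow> nat \<Rightarrow> complex" where
  "Ls a b z n = (if n \<le> N then yv a b z n else if n = Suc N then yv a b z N + pv a b z N / of_real (f N) else 0)"

lemma fnz': "n \<le> N \<Longrightarrow> complex_of_real (f n) \<noteq> 0" using fnz by auto

lemma Ls_diff: "n \<le> N \<Longrightarrow> of_real (f n) * (Ls a b z (Suc n) - Ls a b z n) = pv a b z n"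
proof -
  assume n: "n \<le> N"
  have fn: "complex_of_real (f n) \<noteq> 0" using fnz' n .
  show ?thesis
  proof (cases "n = N")
    case True then show ?thesis using fn by (simp add: Ls_def)
  next
    case False then show ?thesis using fn n by (simp add: Ls_def yv_Suc)
  qed
qed

lemma Ls_sol: "sl_eq f q w N z (Ls a b z)" "\<forall>n>Suc N. Ls a b z n = 0"
proof -
  show "\<forall>n>Suc N. Ls a b z n = 0" by (simp add: Ls_def)
  show "sl_eq f q w N z (Ls a b z)" unfolding sl_eq_def
  proof
    fix n assume n: "n \<in> {1..N}"
    have e1: "of_real (f n) * (Ls a b z (Suc n) - Ls a b z n) = pv a b z n" using n by (intro Ls_diff) auto
    have sn: "Suc (n - 1) = n" using n by auto
    have e2: "of_real (f (n - 1)) * (Ls a b z n - Ls a b z (n - 1)) = pv a b z (n - 1)"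
      using Ls_diff[of "n - 1" a b z] n sn by auto
    have pn: "pv a b z n = pv a b z (n - 1) + (of_real (q n) - z * of_real (w n)) * yv a b z n"
      using pv_Suc[of a b z "n - 1"] sn by simp
    have ln: "Ls a b z n = yv a b z n" using n by (simp add: Ls_def)
    show "- (complex_of_real (f n) * (Ls a b z (Suc n) - Ls a b z n) - complex_of_real (f (n - 1)) * (Ls a b z n - Ls a b z (n - 1))) +
          complex_of_real (q n) * Ls a b z n = z * complex_of_real (w n) * Ls a b z n"
      by (simp only: e1 e2) (simp add: pn ln algebra_simps)
  qed
qed

lemma sol_Ls:
  assumes sl: "sl_eq f q w N z y" and sup: "\<forall>n>Suc N. y n = 0"
  shows "y = Ls (y 0) (of_real (f 0) * (y 1 - y 0)) z"
proof -
  define a where "a = y 0"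
  define b where "b = of_real (f 0) * (y 1 - y 0)"
  have ind: "n \<le> N \<longrightarrow> y n = yv a b z n \<and> of_real (f n) * (y (Suc n) - y n) = pv a b z n" for n
  proof (induction n)
    case 0 then show ?case by (simp add: a_def b_def)
  next
    case (Suc n)
    show ?case
    proof
      assume sn: "Suc n \<le> N"
      then have IH: "y n = yv a b z n" "of_real (f n) * (y (Suc n) - y n) = pv a b z n" using Suc by auto
      have fn: "complex_of_real (f n) \<noteq> 0" using fnz' sn by simp
      have ys: "y (Suc n) = yv a b z (Suc n)"
      proof -
        have "y (Suc n) - y n = pv a b z n / of_real (f n)" using IH(2) fn by (simp add: field_simps)
        then show ?thesis using IH(1) by (simp add: yv_Suc algebra_simps)
      qed
      have eq: "- (complex_of_real (f (Suc n)) * (y (Suc (Suc n)) - y (Suc n)) - complex_of_real (f (Suc n - 1)) * (y (Suc n) - y (Suc n - 1))) +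
          complex_of_real (q (Suc n)) * y (Suc n) = z * complex_of_real (w (Suc n)) * y (Suc n)"
      proof -
        have "Suc n \<in> {1..N}" using sn by simp
        from bspec[OF sl[unfolded sl_eq_def] this] show ?thesis by simp
      qed
      have "of_real (f (Suc n)) * (y (Suc (Suc n)) - y (Suc n)) = pv a b z n + (of_real (q (Suc n)) - z * of_real (w (Suc n))) * y (Suc n)"
        using eq IH(2) by (simp add: algebra_simps)
      then show "y (Suc n) = yv a b z (Suc n) \<and> of_real (f (Suc n)) * (y (Suc (Suc n)) - y (Suc n)) = pv a b z (Suc n)"
        using ys by (simp add: pv_Suc)
    qed
  qed
  show ?thesis
  proof (rule ext)
    fix n
    show "y n = Ls (y 0) (of_real (f 0) * (y 1 - y 0)) z n"
    proof (cases "n \<le> N")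
      case True then show ?thesis using ind[of n] by (simp add: Ls_def a_def b_def)
    next
      case False
      show ?thesis
      proof (cases "n = Suc N")
        case True
        have fN: "complex_of_real (f N) \<noteq> 0" using fnz' by simp
        have "y (Suc N) = y N + pv a b z N / of_real (f N)" using ind[of N] fN by (simp add: field_simps)
        then show ?thesis using True ind[of N] by (simp add: Ls_def a_def b_def)
      next
        case False
        then show ?thesis using sup \<open>\<not> n \<le> N\<close> by (simp add: Ls_def)
      qed
    qed
  qed
qed

lemma Ls_bdry: "col2 (Ls a b z 0) (of_real (f 0) * (Ls a b z 1 - Ls a b z 0)) = col2 a b"
  "col2 (Ls a b z N) (of_real (f N) * (Ls a b z (Suc N) - Ls a b z N)) = col2 (yv a b z N) (pv a b z N)"
  using Ls_diff[of 0 a b z] Ls_diff[of N a b z] by (simp_all add: Ls_def)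

definition Phi :: "complex \<Rightarrow> complex^2^2" where
  "Phi z = (\<chi> i j. if i = 1 then (if j = 1 then ev (Y 1 0 N) z else ev (Y 0 1 N) z)
                    else (if j = 1 then ev (P 1 0 N) z else ev (P 0 1 N) z))"

lemma Phi_col2: "Phi z *v col2 a b = col2 (yv a b z N) (pv a b z N)"
  by (simp add: mat_col2 Phi_def yv_def pv_def algebra_simps)

lemma BC_mult: "(A + B ** Phi z) *v col2 a b = A *v col2 a b + B *v col2 (yv a b z N) (pv a b z N)"
  by (simp only: matrix_vector_mult_add_rdistrib matrix_vector_mul_assoc[symmetric] Phi_col2)

lemma bc_Ls: "bc_holds f N A B (Ls a b z) \<longleftrightarrow> (A + B ** Phi z) *v col2 a b = 0"
  unfolding bc_holds_def Ls_bdry BC_mult ..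

lemma sol_space_char:
  "sol_space f q w N A B z = {Ls a b z | a b. (A + B ** Phi z) *v col2 a b = 0}"
proof (intro equalityI subsetI)
  fix y assume "y \<in> sol_space f q w N A B z"
  then have y: "sl_eq f q w N z y" "\<forall>n>Suc N. y n = 0" "bc_holds f N A B y" by (auto simp: sol_space_def)
  define a where "a = y 0"
  define b where "b = of_real (f 0) * (y 1 - y 0)"
  have ye: "y = Ls a b z" unfolding a_def b_def by (rule sol_Ls[OF y(1,2)])
  have "(A + B ** Phi z) *v col2 a b = 0"
    using y(3) bc_Ls ye by metis
  then show "y \<in> {Ls a b z | a b. (A + B ** Phi z) *v col2 a b = 0}" using ye by blast
next
  fix y assume "y \<in> {Ls a b z | a b. (A + B ** Phi z) *v col2 a b = 0}"
  then obtain a b where ab: "y = Ls a b z" "(A + B ** Phi z) *v col2 a b = 0" by blast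
  have "bc_holds f N A B y"
    using ab bc_Ls by metis
  then show "y \<in> sol_space f q w N A B z" using Ls_sol ab(1) by (simp add: sol_space_def)
qed

end


interpretation fvs: vector_space "\<lambda>(c::complex) (y::nat \<Rightarrow> complex). (\<lambda>n. c * y n)"
  by unfold_locales (auto simp: fun_eq_iff algebra_simps)

lemma row_null:
  fixes u v a b :: complex
  assumes "u \<noteq> 0 \<or> v \<noteq> 0"
  shows "u * a + v * b = 0 \<longleftrightarrow> (\<exists>t. a = t * v \<and> b = - t * u)"
proof
  assume h: "u * a + v * b = 0"
  show "\<exists>t. a = t * v \<and> b = - t * u"
  proof (cases "u = 0")
    case True
    then have v: "v \<noteq> 0" using assms by simp
    then have "b = 0" using h True by simp
    then show ?thesis using True v by (intro exI[of _ "a / v"]) simp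
  next
    case False
    have "a = (- b / u) * v" using h False by (simp add: field_simps) (metis add.commute add_eq_0_iff2 mult.commute)
    moreover have "b = - (- b / u) * u" using False by simp
    ultimately show ?thesis by blast
  qed
next
  assume "\<exists>t. a = t * v \<and> b = - t * u"
  then show "u * a + v * b = 0" by (auto simp: algebra_simps)
qed

lemma null2:
  fixes C :: "complex^2^2"
  assumes "det C = 0" "C \<noteq> 0"
  shows "\<exists>a0 b0. (a0 \<noteq> 0 \<or> b0 \<noteq> 0) \<and> (\<forall>a b. C *v col2 a b = 0 \<longleftrightarrow> (\<exists>t. a = t * a0 \<and> b = t * b0))"
proof -
  have d: "C$1$1 * C$2$2 - C$1$2 * C$2$1 = 0" using assms(1) by (simp add: det_2)
  have nz: "C$1$1 \<noteq> 0 \<or> C$1$2 \<noteq> 0 \<or> C$2$1 \<noteq> 0 \<or> C$2$2 \<noteq> 0"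
    using assms(2) by (auto simp: vec_eq_iff forall_2)
  show ?thesis
  proof (cases "C$1$1 \<noteq> 0 \<or> C$1$2 \<noteq> 0")
    case True
    show ?thesis
    proof (intro exI conjI allI)
      show "C$1$2 \<noteq> 0 \<or> - C$1$1 \<noteq> 0" using True by auto
      fix a b
      show "C *v col2 a b = 0 \<longleftrightarrow> (\<exists>t. a = t * C$1$2 \<and> b = t * - C$1$1)"
      proof
        assume "C *v col2 a b = 0"
        then have "C$1$1 * a + C$1$2 * b = 0" by (simp add: mat_col2 col2_zero)
        then show "\<exists>t. a = t * C$1$2 \<and> b = t * - C$1$1" using row_null[OF True] by auto
      next
        assume "\<exists>t. a = t * C$1$2 \<and> b = t * - C$1$1"
        then obtain t where t: "a = t * C$1$2" "b = t * - C$1$1" by blast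
        have "C$2$1 * a + C$2$2 * b = - t * (C$1$1 * C$2$2 - C$1$2 * C$2$1)" using t by (simp add: algebra_simps)
        then show "C *v col2 a b = 0" using t d by (simp add: mat_col2 col2_zero algebra_simps)
      qed
    qed
  next
    case False
    then have r1: "C$1$1 = 0" "C$1$2 = 0" by auto
    then have T: "C$2$1 \<noteq> 0 \<or> C$2$2 \<noteq> 0" using nz by auto
    show ?thesis
    proof (intro exI conjI allI)
      show "C$2$2 \<noteq> 0 \<or> - C$2$1 \<noteq> 0" using T by auto
      fix a b
      show "C *v col2 a b = 0 \<longleftrightarrow> (\<exists>t. a = t * C$2$2 \<and> b = t * - C$2$1)"
        using row_null[OF T, of a b] r1 by (auto simp: mat_col2 col2_zero)
    qed
  qed
qed

lemma null_det:
  fixes C :: "complex^2^2"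
  assumes "det C \<noteq> 0" "C *v col2 a b = 0"
  shows "a = 0 \<and> b = 0"
proof -
  have d: "C$1$1 * C$2$2 - C$1$2 * C$2$1 \<noteq> 0" using assms(1) by (simp add: det_2)
  have e: "C$1$1 * a + C$1$2 * b = 0" "C$2$1 * a + C$2$2 * b = 0" using assms(2) by (simp_all add: mat_col2 col2_zero)
  have "a * (C$1$1 * C$2$2 - C$1$2 * C$2$1) = C$2$2 * (C$1$1 * a + C$1$2 * b) - C$1$2 * (C$2$1 * a + C$2$2 * b)"
    by (simp add: algebra_simps)
  then have a: "a = 0" using e d by simp
  have "b * (C$1$1 * C$2$2 - C$1$2 * C$2$1) = C$1$1 * (C$2$1 * a + C$2$2 * b) - C$2$1 * (C$1$1 * a + C$1$2 * b)"
    by (simp add: algebra_simps)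
  then have "b = 0" using e d by simp
  then show ?thesis using a by simp
qed

context slp
begin

lemma Ls_scale: "Ls (t * a) (t * b) z = (\<lambda>n. t * Ls a b z n)"
  by (rule ext) (simp add: Ls_def yv_def pv_def algebra_simps add_divide_distrib)

lemma Ls_add: "Ls (a1 + a2) (b1 + b2) z = Ls a1 b1 z + Ls a2 b2 z"
  by (rule ext) (simp add: Ls_def yv_def pv_def algebra_simps add_divide_distrib)

lemma Ls_zero: "Ls a b z = 0 \<longleftrightarrow> a = 0 \<and> b = 0"
proof
  assume h: "Ls a b z = 0"
  have a: "a = 0" using fun_cong[OF h, of 0] by (simp add: Ls_def)
  have "Ls a b z 1 = a + b / of_real (f 0)" using N2 by (simp add: Ls_def yv_Suc[of a b z 0, simplified])
  then have "b / of_real (f 0) = 0" using fun_cong[OF h, of 1] a by simp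
  then show "a = 0 \<and> b = 0" using a fnz' by auto
next
  assume "a = 0 \<and> b = 0"
  then show "Ls a b z = 0" by (auto simp: fun_eq_iff Ls_def yv_def pv_def)
qed

lemma eig_iff_det: "is_eigenvalue f q w N A B z \<longleftrightarrow> det (A + B ** Phi z) = 0"
proof
  assume "is_eigenvalue f q w N A B z"
  then obtain y where "y \<in> sol_space f q w N A B z" "y \<noteq> 0" by (auto simp: is_eigenvalue_def)
  then obtain a b where ab: "y = Ls a b z" "(A + B ** Phi z) *v col2 a b = 0" "\<not> (a = 0 \<and> b = 0)"
    unfolding sol_space_char using Ls_zero by blast
  then show "det (A + B ** Phi z) = 0" using null_det by blast
next
  assume d: "det (A + B ** Phi z) = 0"
  show "is_eigenvalue f q w N A B z"
  proof (cases "A + B ** Phi z = 0")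
    case True
    have "Ls 1 0 z \<in> sol_space f q w N A B z" unfolding sol_space_char using True by auto
    moreover have "Ls 1 0 z \<noteq> 0" using Ls_zero by simp
    ultimately show ?thesis by (auto simp: is_eigenvalue_def)
  next
    case False
    obtain a0 b0 where ab: "a0 \<noteq> 0 \<or> b0 \<noteq> 0" "\<forall>a b. (A + B ** Phi z) *v col2 a b = 0 \<longleftrightarrow> (\<exists>t. a = t * a0 \<and> b = t * b0)"
      using null2[OF d False] by blast
    have "Ls a0 b0 z \<in> sol_space f q w N A B z" unfolding sol_space_char using ab(2) by force
    moreover have "Ls a0 b0 z \<noteq> 0" using Ls_zero ab(1) by simp
    ultimately show ?thesis by (auto simp: is_eigenvalue_def)
  qed
qed

lemma mult_1: assumes "det (A + B ** Phi z) = 0" "A + B ** Phi z \<noteq> 0"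
  shows "eig_mult f q w N A B z = 1"
proof -
  obtain a0 b0 where ab: "a0 \<noteq> 0 \<or> b0 \<noteq> 0" "\<forall>a b. (A + B ** Phi z) *v col2 a b = 0 \<longleftrightarrow> (\<exists>t. a = t * a0 \<and> b = t * b0)"
    using null2[OF assms] by blast
  define v where "v = Ls a0 b0 z"
  have "sol_space f q w N A B z = range (\<lambda>t. (\<lambda>n. t * v n))"
    unfolding sol_space_char v_def using ab(2) by (auto simp: Ls_scale[symmetric])
  also have "\<dots> = fvs.span {v}" by (simp add: fvs.span_singleton)
  finally have "eig_mult f q w N A B z = fvs.dim (fvs.span {v})" by (simp add: eig_mult_def)
  also have "\<dots> = 1"
  proof -
    have "v \<noteq> 0" using Ls_zero ab(1) by (simp add: v_def)
    then have "fvs.independent {v}" by simp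
    then show ?thesis using fvs.dim_span_eq_card_independent by fastforce
  qed
  finally show ?thesis .
qed

lemma mult_2: assumes "A + B ** Phi z = 0"
  shows "eig_mult f q w N A B z = 2"
proof -
  define u where "u = Ls 1 0 z"
  define v where "v = Ls 0 1 z"
  have S: "sol_space f q w N A B z = {Ls a b z | a b. True}" unfolding sol_space_char assms by simp
  have decomp: "Ls a b z = (\<lambda>n. a * u n) + (\<lambda>n. b * v n)" for a b
    using Ls_add[of "a * 1" "b * 0" "a * 0" "b * 1" z] Ls_scale[of a 1 0 z] Ls_scale[of b 0 1 z]
    by (simp add: u_def v_def)
  have "{Ls a b z | a b. True} = fvs.span {u, v}"
  proof (intro equalityI subsetI)
    fix y assume "y \<in> {Ls a b z | a b. True}"
    then obtain a b where "y = Ls a b z" by blast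
    have su: "u \<in> fvs.span {u, v}" "v \<in> fvs.span {u, v}" by (auto intro: fvs.span_base)
    have "(\<lambda>n. a * u n) \<in> fvs.span {u, v}" using fvs.span_scale[OF su(1), of a] by simp
    moreover have "(\<lambda>n. b * v n) \<in> fvs.span {u, v}" using fvs.span_scale[OF su(2), of b] by simp
    ultimately show "y \<in> fvs.span {u, v}" unfolding decomp \<open>y = Ls a b z\<close> by (rule fvs.span_add)
  next
    fix y assume "y \<in> fvs.span {u, v}"
    moreover have "fvs.span {u, v} \<subseteq> {Ls a b z | a b. True}"
    proof (rule fvs.span_minimal)
      show "{u, v} \<subseteq> {Ls a b z | a b. True}" by (auto simp: u_def v_def)
      show "fvs.subspace {Ls a b z | a b. True}"
        unfolding fvs.subspace_def
      proof (intro conjI ballI allI)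
        show "0 \<in> {Ls a b z | a b. True}" using Ls_zero[of 0 0 z] by auto
        fix x y assume "x \<in> {Ls a b z | a b. True}" "y \<in> {Ls a b z | a b. True}"
        then obtain a1 b1 a2 b2 where "x = Ls a1 b1 z" "y = Ls a2 b2 z" by blast
        then show "x + y \<in> {Ls a b z | a b. True}" using Ls_add[of a1 a2 b1 b2 z] by (metis (mono_tags, lifting) mem_Collect_eq)
      next
        fix c x assume "x \<in> {Ls a b z | a b. True}"
        then obtain a b where "x = Ls a b z" by blast
        then have "(\<lambda>n. c * x n) = Ls (c * a) (c * b) z" using Ls_scale by simp
        then show "(\<lambda>n. c * x n) \<in> {Ls a b z | a b. True}" by blast
      qed
    qed
    ultimately show "y \<in> {Ls a b z | a b. True}" by blast
  qed
  then have "eig_mult f q w N A B z = fvs.dim (fvs.span {u, v})" by (simp add: eig_mult_def S)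
  also have "\<dots> = 2"
  proof -
    have vnz: "v \<noteq> 0" using Ls_zero by (simp add: v_def)
    have "u \<notin> fvs.span {v}"
    proof
      assume "u \<in> fvs.span {v}"
      then obtain k where "u = (\<lambda>n. k * v n)" by (auto simp: fvs.span_singleton)
      then have "u 0 = k * v 0" by simp
      then show False by (simp add: u_def v_def Ls_def)
    qed
    moreover have "fvs.independent {v}" using vnz by simp
    ultimately have ind: "fvs.independent {u, v}" by (rule fvs.independent_insertI)
    have "u \<noteq> v" using \<open>u \<notin> fvs.span {v}\<close> by (auto intro: fvs.span_base)
    then show ?thesis using fvs.dim_span_eq_card_independent[OF ind] by simp
  qed
  finally show ?thesis .
qed

end


lemma green_step:
  fixes y p z :: complex and r q w :: real
  shows "Im ((p + (of_real q - z * of_real w) * (y + p / of_real r)) * cnj (y + p / of_real r))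
       = Im (p * cnj y) - Im z * w * (cmod (y + p / of_real r))^2"
proof -
  define y' where "y' = y + p / of_real r"
  have a: "Im (p * cnj y') = Im (p * cnj y)"
    unfolding y'_def by (simp add: algebra_simps)
  have b: "y' * cnj y' = of_real ((cmod y')^2)" by (simp add: complex_mult_cnj cmod_power2)
  have "(p + (of_real q - z * of_real w) * y') * cnj y' = p * cnj y' + (of_real q - z * of_real w) * (y' * cnj y')"
    by (simp add: algebra_simps)
  then have "Im ((p + (of_real q - z * of_real w) * y') * cnj y') = Im (p * cnj y') - Im z * w * (cmod y')^2"
    unfolding b by simp
  then show ?thesis using a by (simp add: y'_def)
qed

lemma cid_mult: "(- cid) ** (P::complex^2^2) = - P"
  by (simp add: vec_eq_iff forall_2 matrix_matrix_mult_def sum_2 cid_def)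

context slp
begin

lemma green:
  "Im (pv a b z n * cnj (yv a b z n)) = Im (b * cnj a) - Im z * (\<Sum>k\<in>{1..n}. w k * (cmod (yv a b z k))^2)"
proof (induction n)
  case 0 then show ?case by simp
next
  case (Suc n)
  have "Im (pv a b z (Suc n) * cnj (yv a b z (Suc n))) = Im (pv a b z n * cnj (yv a b z n)) - Im z * w (Suc n) * (cmod (yv a b z (Suc n)))^2"
    unfolding pv_Suc unfolding yv_Suc by (rule green_step)
  then show ?case using Suc by (simp add: algebra_simps)
qed

lemma ev_det: "ev (Y 1 0 N) z * ev (P 0 1 N) z - ev (Y 0 1 N) z * ev (P 1 0 N) z = 1"
proof -
  have "ev (Y 1 0 N * P 0 1 N - Y 0 1 N * P 1 0 N) z = 1" using det_st[of N] by (simp add: ev_def)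
  then show ?thesis by (simp add: ev_diff ev_mult)
qed

lemma ev_Dp: "ev (Dp m11 m12 m21 m22) z = of_real m22 * ev (Y 1 0 N) z - of_real m12 * ev (P 1 0 N) z
   - of_real m21 * ev (Y 0 1 N) z + of_real m11 * ev (P 0 1 N) z"
  by (simp add: Dp_def Ap_def Dd_def ev_add ev_diff ev_smult)

lemma D_root_real:
  assumes detM: "m11 * m22 - m12 * m21 = 1" and root: "ev (Dp m11 m12 m21 m22) z = 0"
  shows "Im z = 0"
proof (rule ccontr)
  assume imz: "Im z \<noteq> 0"
  define A :: "complex^2^2" where "A = (\<chi> i j. \<i> * of_real (if i = 1 then (if j = 1 then m11 else m12) else (if j = 1 then m21 else m22)))"
  have "det (A + (- cid) ** Phi z) = (\<i> * \<i>) * of_real (m11 * m22 - m12 * m21)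
      - \<i> * ev (Dp m11 m12 m21 m22) z + (ev (Y 1 0 N) z * ev (P 0 1 N) z - ev (Y 0 1 N) z * ev (P 1 0 N) z)"
    unfolding cid_mult ev_Dp by (simp add: det_2 A_def Phi_def algebra_simps)
  also have "\<dots> = 0"
  proof -
    have dM: "complex_of_real (m11 * m22 - m12 * m21) = 1" using detM by simp
    show ?thesis by (simp only: dM root ev_det) simp
  qed
  finally have "is_eigenvalue f q w N A (- cid) z" using eig_iff_det by simp
  then obtain y where y: "y \<in> sol_space f q w N A (- cid) z" "y \<noteq> 0" by (auto simp: is_eigenvalue_def)
  then obtain a b where ab: "y = Ls a b z" "(A + (- cid) ** Phi z) *v col2 a b = 0"
    unfolding sol_space_char by blast
  have nz: "\<not> (a = 0 \<and> b = 0)" using y(2) ab(1) Ls_zero by simp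
  have eqs: "\<i> * of_real m11 * a + \<i> * of_real m12 * b - (ev (Y 1 0 N) z * a + ev (Y 0 1 N) z * b) = 0"
     "\<i> * of_real m21 * a + \<i> * of_real m22 * b - (ev (P 1 0 N) z * a + ev (P 0 1 N) z * b) = 0"
    using ab(2) unfolding cid_mult by (simp_all add: mat_col2 col2_zero A_def Phi_def algebra_simps)
  have yN: "yv a b z N = \<i> * (of_real m11 * a + of_real m12 * b)"
    using eqs(1) by (simp add: yv_def algebra_simps)
  have pN: "pv a b z N = \<i> * (of_real m21 * a + of_real m22 * b)"
    using eqs(2) by (simp add: pv_def algebra_simps)
  have "Im (pv a b z N * cnj (yv a b z N)) = (m11 * m22 - m12 * m21) * Im (b * cnj a)"
    unfolding yN pN by (simp add: algebra_simps)
  then have "Im (pv a b z N * cnj (yv a b z N)) = Im (b * cnj a)" using detM by simp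
  then have S0: "Im z * (\<Sum>k\<in>{1..N}. w k * (cmod (yv a b z k))^2) = 0" using green[of a b z N] by simp
  then have S: "(\<Sum>k\<in>{1..N}. w k * (cmod (yv a b z k))^2) = 0" using imz by simp
  have nn: "\<And>k. k \<in> {1..N} \<Longrightarrow> 0 \<le> w k * (cmod (yv a b z k))^2"
    using wpos by (intro mult_nonneg_nonneg) (auto simp: less_imp_le)
  have allz: "\<forall>k\<in>{1..N}. w k * (cmod (yv a b z k))^2 = 0"
    using sum_nonneg_eq_0_iff[of "{1..N}" "\<lambda>k. w k * (cmod (yv a b z k))^2"] S nn by simp
  have yk: "yv a b z k = 0" if "k \<in> {1..N}" for k
  proof -
    have "w k > 0" using wpos that by auto
    moreover have "w k * (cmod (yv a b z k))^2 = 0" using allz that by blast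
    ultimately show ?thesis by simp
  qed
  have y1: "yv a b z 1 = 0" and y2: "yv a b z 2 = 0" using yk N2 by auto
  have f0: "complex_of_real (f 0) \<noteq> 0" and f1: "complex_of_real (f 1) \<noteq> 0" using fnz' N2 by auto
  have "yv a b z 2 = yv a b z 1 + pv a b z 1 / of_real (f 1)" using yv_Suc[of a b z 1] by (simp add: numeral_2_eq_2)
  then have p1: "pv a b z 1 = 0" using y1 y2 f1 by simp
  have "pv a b z 1 = b + (of_real (q 1) - z * of_real (w 1)) * yv a b z 1" using pv_Suc[of a b z 0] by simp
  then have b0: "b = 0" using p1 y1 by simp
  have "yv a b z 1 = a + b / of_real (f 0)" using yv_Suc[of a b z 0] by simp
  then have "a = 0" using y1 b0 by simp
  then show False using nz b0 by simp
qed

end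

lemma card_real_roots:
  fixes p :: "real poly"
  assumes p0: "p \<noteq> 0"
    and real: "\<forall>z. poly (map_poly complex_of_real p) z = 0 \<longrightarrow> Im z = 0"
    and simple: "\<forall>x. poly p x = 0 \<longrightarrow> poly (pderiv p) x \<noteq> 0"
  shows "card {x. poly p x = 0} = degree p"
proof -
  define pc where "pc = map_poly complex_of_real p"
  have dpc: "degree pc = degree p" unfolding pc_def by (rule degree_map_poly) simp
  have pc0: "pc \<noteq> 0" using p0 unfolding pc_def by (subst map_poly_eq_0_iff) auto
  have evr: "poly pc (of_real x) = of_real (poly p x)" for x using ev_real[of p x] by (simp add: ev_def pc_def)
  have evd: "poly (pderiv pc) (of_real x) = of_real (poly (pderiv p) x)" for x
    using ev_pderiv_real[of p x] by (simp add: pc_def)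
  have R: "{z. poly pc z = 0} = complex_of_real ` {x. poly p x = 0}"
  proof (intro equalityI subsetI)
    fix z assume "z \<in> {z. poly pc z = 0}"
    then have z: "poly pc z = 0" by simp
    then have "Im z = 0" using real by (simp add: pc_def)
    then have zr: "z = of_real (Re z)" by (simp add: complex_eq_iff)
    then have "poly p (Re z) = 0" using z evr[of "Re z"] by simp
    then show "z \<in> complex_of_real ` {x. poly p x = 0}" using zr by blast
  next
    fix z assume "z \<in> complex_of_real ` {x. poly p x = 0}"
    then show "z \<in> {z. poly pc z = 0}" using evr by auto
  qed
  have rsq: "rsquarefree pc" unfolding rsquarefree_roots
  proof (intro allI notI)
    fix a assume a: "poly pc a = 0 \<and> poly (pderiv pc) a = 0"
    then obtain x where x: "a = of_real x" "poly p x = 0" using R by blast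
    then have "poly (pderiv p) x \<noteq> 0" using simple by simp
    then show False using a x evd[of x] by simp
  qed
  have finR: "finite {z. poly pc z = 0}" using poly_roots_finite[OF pc0] .
  have "pc = smult (lead_coeff pc) (\<Prod>z|poly pc z = 0. [:-z, 1:])"
    using complex_poly_decompose_rsquarefree[OF rsq] by simp
  then have "degree pc = degree (\<Prod>z|poly pc z = 0. [:-z, 1:])"
    using pc0 by (metis degree_smult_eq leading_coeff_0_iff)
  also have "\<dots> = (\<Sum>z|poly pc z = 0. degree [:-z, 1:])" by (rule degree_prod_sum_eq) auto
  also have "\<dots> = card {z. poly pc z = 0}" by simp
  also have "\<dots> = card {x. poly p x = 0}" unfolding R by (rule card_image) (simp add: inj_on_def)
  finally show ?thesis using dpc by simp
qed

lemma poly_pos_inf: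
  fixes p :: "real poly"
  assumes "degree p \<ge> 1" "lead_coeff p > 0"
  shows "\<exists>R. \<forall>x\<ge>R. poly p x > K"
proof -
  have d: "degree [:- K:] < degree p" using assms by simp
  have "lead_coeff ([:- K:] + p) = lead_coeff p" using d by (rule lead_coeff_add_le)
  then obtain R where "\<forall>x\<ge>R. poly ([:- K:] + p) x \<ge> lead_coeff p"
    using poly_pinfty_gt_lc[of "[:- K:] + p"] assms by auto
  then have "\<forall>x\<ge>R. poly p x > K" using assms(2) by (auto simp: algebra_simps)
  then show ?thesis by blast
qed

lemma poly_neg_inf:
  fixes p :: "real poly"
  assumes "degree p \<ge> 1" "(-1)^(degree p) * lead_coeff p > 0"
  shows "\<exists>R. \<forall>x\<le>R. poly p x > K"
proof -
  define r where "r = pcompose p [:0, -1:]"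
  have dr: "degree r = degree p" by (simp add: r_def degree_pcompose)
  have lr: "lead_coeff r = lead_coeff p * (-1)^(degree p)" unfolding r_def
    by (subst lead_coeff_comp) auto
  obtain R where R: "\<forall>x\<ge>R. poly r x > K" using poly_pos_inf[of r K] dr lr assms by (auto simp: mult.commute)
  have "\<forall>x\<le>-R. poly p x > K"
  proof (intro allI impI)
    fix x assume "x \<le> -R"
    then have "poly r (-x) > K" using R by auto
    then show "poly p x > K" by (simp add: r_def poly_pcompose)
  qed
  then show ?thesis by blast
qed

lemma poly_abs_inf:
  fixes p :: "real poly"
  assumes "degree p \<ge> 1"
  shows "\<exists>R. \<forall>x\<ge>R. \<bar>poly p x\<bar> > K"
proof (cases "lead_coeff p > 0")
  case True
  then obtain R where "\<forall>x\<ge>R. poly p x > \<bar>K\<bar>" using poly_pos_inf[OF assms] by blast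
  then show ?thesis by force
next
  case False
  have lc0: "lead_coeff p \<noteq> 0" using assms by (metis leading_coeff_0_iff not_one_le_zero degree_0)
  have "lead_coeff p < 0" using False lc0 by linarith
  then have "lead_coeff (- p) > 0" by simp
  then obtain R where "\<forall>x\<ge>R. poly (- p) x > \<bar>K\<bar>" using poly_pos_inf[of "- p"] assms by auto
  then show ?thesis by force
qed

context slp
begin

lemma L_sign: "(-1)^(N - 1) * L N = (\<Prod>k\<in>{1..<N}. w k) * (\<Prod>k\<in>{1..<N}. 1 / f k)"
proof -
  have "L N = (\<Prod>k\<in>{1..<N}. (-1) * (w k * (1 / f k)))" unfolding L_def by (intro prod.cong) auto
  also have "\<dots> = (\<Prod>k\<in>{1..<N}. (-1::real)) * (\<Prod>k\<in>{1..<N}. w k * (1 / f k))"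
    by (rule prod.distrib)
  also have "\<dots> = (-1)^(N - 1) * (\<Prod>k\<in>{1..<N}. w k * (1 / f k))"
    by simp
  also have "(\<Prod>k\<in>{1..<N}. w k * (1 / f k)) = (\<Prod>k\<in>{1..<N}. w k) * (\<Prod>k\<in>{1..<N}. 1 / f k)"
    by (rule prod.distrib)
  finally show ?thesis by simp
qed

lemma prod_f: "(\<Prod>k<N. 1 / f k) = (1 / f 0) * (\<Prod>k\<in>{1..<N}. 1 / f k)"
proof -
  have "{..<N} = insert 0 {1..<N}" using N2 by auto
  then show ?thesis by simp
qed

lemma L_nz: "L N \<noteq> 0"
proof -
  have "\<forall>k\<in>{1..<N}. - w k / f k \<noteq> 0"
  proof
    fix k assume k: "k \<in> {1..<N}"
    then have "w k > 0" "f k \<noteq> 0" using fnz wpos by auto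
    then show "- w k / f k \<noteq> 0" by simp
  qed
  then show ?thesis unfolding L_def by (simp add: prod_zero_iff)
qed

definition "Pw = w N * (\<Prod>k\<in>{1..<N}. w k)"
definition "Pf = (\<Prod>k<N. 1 / f k)"

lemma Pw_pos: "Pw > 0" unfolding Pw_def using wpos N2 by (intro mult_pos_pos prod_pos) auto

lemma coeff_Y_N: "coeff (Y a b N) N = 0"
  using coeff_st[of N a b] N2 by (intro coeff_eq_0) auto

lemma deg_Dp: "degree (Dp m11 m12 m21 m22) \<le> N"
  using coeff_st[of N 1 0] coeff_st[of N 0 1] N2 unfolding Dp_def Ap_def Dd_def
  by (intro degree_add_le degree_diff_le) (auto intro: order.trans[OF degree_smult_le])

lemma deg_Cp: "degree (Cp m11 m21) \<le> N"
  using coeff_st[of N 1 0] N2 unfolding Cp_def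
  by (intro degree_diff_le) (auto intro: order.trans[OF degree_smult_le])

lemma coeff_Dp: "(-1)^N * coeff (Dp m11 m12 m21 m22) N = Pw * Pf * (m11 - f 0 * m12)"
proof -
  have c0: "coeff (P 1 0 N) N = - w N * L N" and c1: "coeff (P 0 1 N) N = - w N * (1 / f 0) * L N"
    using coeff_st[of N 1 0] coeff_st[of N 0 1] N2 by auto
  define r where "r = m11 / f 0"
  have f0: "f 0 \<noteq> 0" using fnz by simp
  have cD: "coeff (Dp m11 m12 m21 m22) N = w N * L N * (m12 - r)"
    unfolding Dp_def Ap_def Dd_def using c0 c1 by (simp add: coeff_Y_N algebra_simps r_def)
  have s: "(-1::real)^N = - ((-1)^(N - 1))" using N2 by (cases N) auto
  have "(-1)^N * coeff (Dp m11 m12 m21 m22) N = w N * ((-1)^(N - 1) * L N) * (r - m12)"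
    unfolding cD s by (simp add: algebra_simps)
  also have "r - m12 = (1 / f 0) * (m11 - f 0 * m12)" unfolding r_def using f0 by (simp add: field_simps)
  also have "w N * ((-1)^(N - 1) * L N) * ((1 / f 0) * (m11 - f 0 * m12)) =
     (w N * (\<Prod>k\<in>{1..<N}. w k)) * ((1 / f 0) * (\<Prod>k\<in>{1..<N}. 1 / f k)) * (m11 - f 0 * m12)"
    unfolding L_sign by (simp only: mult_ac)
  also have "\<dots> = Pw * Pf * (m11 - f 0 * m12)" unfolding Pw_def Pf_def prod_f by simp
  finally show ?thesis .
qed

lemma coeff_Cp: "(-1)^N * coeff (Cp m11 m21) N = Pw * Pf * f 0 * m11"
proof -
  have c0: "coeff (P 1 0 N) N = - w N * L N" using coeff_st[of N 1 0] N2 by auto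
  have "coeff (Cp m11 m21) N = - m11 * w N * L N" unfolding Cp_def using c0 by (simp add: coeff_Y_N)
  moreover have "(-1::real)^N = - ((-1)^(N - 1))" using N2 by (cases N) auto
  ultimately have "(-1)^N * coeff (Cp m11 m21) N = m11 * w N * ((-1)^(N - 1) * L N)"
    by (simp add: algebra_simps)
  also have "\<dots> = (w N * (\<Prod>k\<in>{1..<N}. w k)) * ((1 / f 0) * (\<Prod>k\<in>{1..<N}. 1 / f k)) * f 0 * m11"
    unfolding L_sign using fnz by (simp add: algebra_simps)
  also have "\<dots> = Pw * Pf * f 0 * m11" unfolding Pw_def Pf_def prod_f by simp
  finally show ?thesis .
qed

lemma coeff_Cp0: "coeff (Cp 0 m21) (N - 1) = - m21 * L N" and deg_Cp0: "degree (Cp 0 m21) \<le> N - 1"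
  using coeff_st[of N 1 0] N2 unfolding Cp_def by (auto intro: order.trans[OF degree_smult_le])

end


context slp
begin

lemma F1': assumes "m11 * m22 - m12 * m21 = 1" "\<bar>poly (Dp m11 m12 m21 m22) x\<bar> < 2"
  shows "poly (Cp m11 m21) x * poly (pderiv (Dp m11 m12 m21 m22)) x > 0"
  using F1[of m11 m22 m12 m21 x] assms Dp_eval[of m11 m22 m12 m21 x] by (simp add: cc_def)

lemma exists_zz:
  assumes detM: "m11 * m22 - m12 * m21 = 1" and pos: "m11 - f 0 * m12 > 0" and Pfp: "Pf > 0"
  shows "\<exists>\<xi>. zz (Dp m11 m12 m21 m22) N \<xi>"
proof -
  define p where "p = Dp m11 m12 m21 m22"
  have N1: "N \<ge> 1" using N2 by simp
  have cpos: "(-1)^N * coeff p N > 0" unfolding p_def coeff_Dp using Pw_pos Pfp pos by simp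
  then have cnz: "coeff p N \<noteq> 0" by auto
  have degp: "degree p = N" using deg_Dp[of m11 m12 m21 m22] le_degree[OF cnz] by (simp add: p_def)
  have p0: "p \<noteq> 0" using cnz by auto
  have crit: "\<forall>x. \<bar>poly p x\<bar> < 2 \<longrightarrow> poly (pderiv p) x \<noteq> 0"
    using F1'[OF detM] unfolding p_def by (metis less_irrefl mult_zero_right)
  have real: "\<forall>z. poly (map_poly complex_of_real p) z = 0 \<longrightarrow> Im z = 0"
    using D_root_real[OF detM] unfolding p_def ev_def by blast
  have simple: "\<forall>x. poly p x = 0 \<longrightarrow> poly (pderiv p) x \<noteq> 0" using crit by simp
  have roots: "card {x. poly p x = 0} = N" using card_real_roots[OF p0 real simple] degp by simp
  have ninf: "\<exists>R. \<forall>x\<le>R. poly p x > 2" using poly_neg_inf[of p 2] degp N1 cpos by simp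
  have pinf: "\<exists>R. \<forall>x\<ge>R. \<bar>poly p x\<bar> > 2" using poly_abs_inf[of p 2] degp N1 by simp
  obtain \<xi> where xi: "(\<forall>k<N. \<xi> k < \<xi> (Suc k))
     \<and> (\<forall>k<N. \<forall>x. \<xi> k < x \<and> x < \<xi> (Suc k) \<longrightarrow> (if even k then poly (pderiv p) x < 0 else poly (pderiv p) x > 0))
     \<and> (\<forall>k\<in>{1..<N}. poly (pderiv p) (\<xi> k) = 0)
     \<and> (\<forall>k\<le>N. if even k then poly p (\<xi> k) \<ge> 2 else poly p (\<xi> k) \<le> -2)
     \<and> poly p (\<xi> 0) > 2 \<and> \<bar>poly p (\<xi> N)\<bar> > 2
     \<and> (\<forall>x. \<bar>poly p x\<bar> \<le> 2 \<longrightarrow> \<xi> 0 < x \<and> x < \<xi> N)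
     \<and> (\<forall>x. poly (pderiv p) x = 0 \<longrightarrow> (\<exists>k\<in>{1..<N}. x = \<xi> k))"
    using zigzag[OF N1 degp roots crit ninf pinf] by blast
  have "zz p N \<xi>" unfolding zz_def using xi N1 by blast
  then show ?thesis unfolding p_def by blast
qed

end


lemma det_real22: "det (M::real^2^2) = M$1$1 * M$2$2 - M$1$2 * M$2$1" by (simp add: det_2)

context slp
begin

abbreviation "y0 x \<equiv> poly (Y 1 0 N) x"
abbreviation "y1 x \<equiv> poly (Y 0 1 N) x"
abbreviation "p0 x \<equiv> poly (P 1 0 N) x"
abbreviation "p1 x \<equiv> poly (P 0 1 N) x"

lemma Phi_real: "Phi (of_real x) = (\<chi> i j. of_real (if i = 1 then (if j = 1 then y0 x else y1 x) else (if j = 1 then p0 x else p1 x)))"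
  by (simp add: Phi_def ev_real vec_eq_iff)

lemma detPhi_real: "y0 x * p1 x - y1 x * p0 x = 1"
proof -
  have "poly (Y 1 0 N * P 0 1 N - Y 0 1 N * P 1 0 N) x = 1" using det_st[of N] by simp
  then show ?thesis by simp
qed

lemma Dp_real: "poly (Dp m11 m12 m21 m22) x = m22 * y0 x - m12 * p0 x - m21 * y1 x + m11 * p1 x"
  by (simp add: Dp_def Ap_def Dd_def)

lemma Cp_real: "poly (Cp m11 m21) x = m11 * p0 x - m21 * y0 x"
  by (simp add: Cp_def)

lemma BCM_det:
  assumes "det M = 1"
  shows "det (cmat M + (- cid) ** Phi (of_real x)) = of_real (2 - poly (Dp (M$1$1) (M$1$2) (M$2$1) (M$2$2)) x)"
proof -
  have d: "M$1$1 * M$2$2 - M$1$2 * M$2$1 = 1" using assms by (simp add: det_2)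
  have "det (cmat M + (- cid) ** Phi (of_real x)) = of_real ((M$1$1 - y0 x) * (M$2$2 - p1 x) - (M$1$2 - y1 x) * (M$2$1 - p0 x))"
    by (simp add: det_2 cid_mult Phi_real cmat_def)
  also have "(M$1$1 - y0 x) * (M$2$2 - p1 x) - (M$1$2 - y1 x) * (M$2$1 - p0 x)
     = (M$1$1 * M$2$2 - M$1$2 * M$2$1) + (y0 x * p1 x - y1 x * p0 x) - poly (Dp (M$1$1) (M$1$2) (M$2$1) (M$2$2)) x"
    unfolding Dp_real by (simp add: algebra_simps)
  finally show ?thesis using d detPhi_real by simp
qed

lemma BCM_zero: "cmat M + (- cid) ** Phi (of_real x) = 0 \<longleftrightarrow>
   (y0 x = M$1$1 \<and> y1 x = M$1$2 \<and> p0 x = M$2$1 \<and> p1 x = M$2$2)"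
  by (simp add: vec_eq_iff forall_2 cid_mult Phi_real cmat_def) (auto simp: eq_commute)

lemma BCmM_det:
  assumes "det M = 1"
  shows "det (cmat (- M) + (- cid) ** Phi (of_real x)) = of_real (2 + poly (Dp (M$1$1) (M$1$2) (M$2$1) (M$2$2)) x)"
proof -
  have d: "M$1$1 * M$2$2 - M$1$2 * M$2$1 = 1" using assms by (simp add: det_2)
  have "det (cmat (- M) + (- cid) ** Phi (of_real x)) = of_real ((- M$1$1 - y0 x) * (- M$2$2 - p1 x) - (- M$1$2 - y1 x) * (- M$2$1 - p0 x))"
    by (simp add: det_2 cid_mult Phi_real cmat_def)
  also have "(- M$1$1 - y0 x) * (- M$2$2 - p1 x) - (- M$1$2 - y1 x) * (- M$2$1 - p0 x)
     = (M$1$1 * M$2$2 - M$1$2 * M$2$1) + (y0 x * p1 x - y1 x * p0 x) + poly (Dp (M$1$1) (M$1$2) (M$2$1) (M$2$2)) x"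
    unfolding Dp_real by (simp add: algebra_simps)
  finally show ?thesis using d detPhi_real by simp
qed

lemma BCmM_zero: "cmat (- M) + (- cid) ** Phi (of_real x) = 0 \<longleftrightarrow>
   (y0 x = - M$1$1 \<and> y1 x = - M$1$2 \<and> p0 x = - M$2$1 \<and> p1 x = - M$2$2)"
  by (simp add: vec_eq_iff forall_2 cid_mult Phi_real cmat_def) (auto simp: eq_commute)

lemma BCT_det: "det (TK_A K + TK_B K ** Phi (of_real x)) = - of_real (poly (Cp (K$1$1) (K$2$1)) x)"
  by (simp add: det_2 Phi_real TK_A_def TK_B_def matrix_matrix_mult_def sum_2 Cp_real algebra_simps)

lemma BCT_nz: "TK_A K + TK_B K ** Phi (of_real x) \<noteq> 0"
proof
  assume "TK_A K + TK_B K ** Phi (of_real x) = 0"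
  then have "(TK_A K + TK_B K ** Phi (of_real x))$1$2 = 0" by simp
  then show False by (simp add: TK_A_def TK_B_def matrix_matrix_mult_def sum_2)
qed

lemma BCP_det:
  assumes "det M = 1"
  shows "det (phase_mat \<gamma> M + (- cid) ** Phi (of_real x)) =
     cis \<gamma> * of_real (2 * cos \<gamma> - poly (Dp (M$1$1) (M$1$2) (M$2$1) (M$2$2)) x)"
proof -
  have d: "M$1$1 * M$2$2 - M$1$2 * M$2$1 = 1" using assms by (simp add: det_2)
  define s where "s = cis \<gamma>"
  have e: "exp (\<i> * complex_of_real \<gamma>) = s" by (simp add: s_def cis_conv_exp mult.commute)
  have ss: "s * s = s * (s + cnj s) - 1"
  proof -
    have "s * cnj s = 1" by (simp add: s_def complex_mult_cnj cmod_power2 cis.sel)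
    then show ?thesis by (simp add: algebra_simps)
  qed
  have sc: "s + cnj s = of_real (2 * cos \<gamma>)" by (simp add: s_def complex_eq_iff cis.sel)
  have "det (phase_mat \<gamma> M + (- cid) ** Phi (of_real x)) =
     (s * M$1$1 - y0 x) * (s * M$2$2 - p1 x) - (s * M$1$2 - y1 x) * (s * M$2$1 - p0 x)"
    by (simp add: det_2 cid_mult Phi_real phase_mat_def e)
  also have "\<dots> = s * s * of_real (M$1$1 * M$2$2 - M$1$2 * M$2$1) - s * of_real (poly (Dp (M$1$1) (M$1$2) (M$2$1) (M$2$2)) x)
       + of_real (y0 x * p1 x - y1 x * p0 x)"
    unfolding Dp_real by (simp add: algebra_simps)
  also have "\<dots> = s * ((s + cnj s) - of_real (poly (Dp (M$1$1) (M$1$2) (M$2$1) (M$2$2)) x))"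
    unfolding d detPhi_real using ss by (simp add: algebra_simps)
  finally show ?thesis unfolding sc by (simp add: s_def)
qed

lemma BCP_nz:
  assumes "det M = 1" "sin \<gamma> \<noteq> 0"
  shows "phase_mat \<gamma> M + (- cid) ** Phi (of_real x) \<noteq> 0"
proof
  assume h: "phase_mat \<gamma> M + (- cid) ** Phi (of_real x) = 0"
  have e: "exp (\<i> * complex_of_real \<gamma>) = cis \<gamma>" by (simp add: cis_conv_exp mult.commute)
  have im: "Im ((phase_mat \<gamma> M + (- cid) ** Phi (of_real x))$i$j) = sin \<gamma> * M$i$j" for i j
    by (simp add: cid_mult Phi_real phase_mat_def e cis.sel)
  have "sin \<gamma> * M$i$j = 0" for i j using im[of i j] h by simp
  then have "M$i$j = 0" for i j using assms(2) by simp
  then have "det M = 0" by (simp add: det_2)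
  then show False using assms(1) by simp
qed

end


lemma sorted_map_upt:
  fixes g :: "nat \<Rightarrow> real"
  assumes "\<And>k. Suc k < n \<Longrightarrow> g k \<le> g (Suc k)"
  shows "sorted (map g [0..<n])"
proof -
  have mono: "g i \<le> g j" if "i \<le> j" "j < n" for i j
    using that
  proof (induction j)
    case 0 then show ?case by simp
  next
    case (Suc j)
    show ?case
    proof (cases "i = Suc j")
      case True then show ?thesis by simp
    next
      case False
      then have "g i \<le> g j" using Suc by simp
      also have "g j \<le> g (Suc j)" using assms Suc by simp
      finally show ?thesis .
    qed
  qed
  show ?thesis unfolding sorted_iff_nth_mono using mono by simp
qed

context zz
begin

lemma list_c:
  assumes c: "\<bar>c\<bar> \<le> 2"
    and E: "\<And>x. E x \<longleftrightarrow> poly p x = c"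
    and m: "\<And>x. poly p x = c \<Longrightarrow> m x = (if poly (pderiv p) x = 0 then 2 else 1)"
  shows "concat (map (\<lambda>x. replicate (m x) x) (sorted_list_of_set {x. E x})) = map (\<lambda>k. rho k c) [0..<N]"
proof (rule eig_list_generic)
  show "sorted (map (\<lambda>k. rho k c) [0..<N])" using rho_sorted c by (intro sorted_map_upt) auto
  show "{x. E x} = set (map (\<lambda>k. rho k c) [0..<N])"
  proof (intro equalityI subsetI)
    fix x assume "x \<in> {x. E x}"
    then have "poly p x = c" using E by simp
    then obtain k where "k < N" "rho k c = x" using rho_all[OF c] by blast
    then show "x \<in> set (map (\<lambda>k. rho k c) [0..<N])" by auto
  next
    fix x assume "x \<in> set (map (\<lambda>k. rho k c) [0..<N])"
    then obtain k where "k < N" "x = rho k c" by auto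
    then show "x \<in> {x. E x}" using E rho(3)[OF _ c] by simp
  qed
  show "\<forall>x\<in>set (map (\<lambda>k. rho k c) [0..<N]). m x = count (mset (map (\<lambda>k. rho k c) [0..<N])) x"
  proof
    fix x assume "x \<in> set (map (\<lambda>k. rho k c) [0..<N])"
    then obtain k where k: "k < N" "x = rho k c" by auto
    then have px: "poly p x = c" using rho(3)[OF _ c] by simp
    show "m x = count (mset (map (\<lambda>k. rho k c) [0..<N])) x"
      unfolding count_map_upt card_rho[OF c px] m[OF px] ..
  qed
qed

end


context slp
begin

lemma Phi_eq_pm:
  assumes d: "m11 * m22 - m12 * m21 = 1" and s: "s = 1 \<or> s = -1"
    and px: "poly (Dp m11 m12 m21 m22) x = 2 * s"
  shows "(y0 x = s * m11 \<and> y1 x = s * m12 \<and> p0 x = s * m21 \<and> p1 x = s * m22) \<longleftrightarrow>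
     poly (pderiv (Dp m11 m12 m21 m22)) x = 0"
proof
  assume h: "y0 x = s * m11 \<and> y1 x = s * m12 \<and> p0 x = s * m21 \<and> p1 x = s * m22"
  have "poly (Bp m12 m22) x = 0" "poly (Cp m11 m21) x = 0" "poly (Ap m12 m22) x = poly (Dd m11 m21) x"
    using h by (auto simp: Bp_def Cp_def Ap_def Dd_def algebra_simps)
  then show "poly (pderiv (Dp m11 m12 m21 m22)) x = 0"
    using F3[of m11 m22 m12 m21 x] d by (simp add: aa_def bb_def cc_def dd_def)
next
  assume h: "poly (pderiv (Dp m11 m12 m21 m22)) x = 0"
  have ad: "\<bar>poly (Ap m12 m22) x + poly (Dd m11 m21) x\<bar> = 2" using px s Dp_eval[of m11 m22 m12 m21 x] d
    by (auto simp: aa_def dd_def)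
  have F: "poly (Bp m12 m22) x = 0 \<and> poly (Cp m11 m21) x = 0 \<and> poly (Ap m12 m22) x = poly (Dd m11 m21) x"
    using F2[of m11 m22 m12 m21 x] d ad h by (simp add: aa_def bb_def cc_def dd_def)
  have sum: "poly (Ap m12 m22) x + poly (Dd m11 m21) x = 2 * s" using px Dp_eval[of m11 m22 m12 m21 x] d
    by (simp add: aa_def dd_def)
  have A: "m22 * y0 x - m12 * p0 x = s" and Dd: "m11 * p1 x - m21 * y1 x = s"
    and Bz: "m22 * y1 x - m12 * p1 x = 0" and Cz: "m11 * p0 x - m21 * y0 x = 0"
    using F sum by (auto simp: Ap_def Bp_def Cp_def Dd_def)
  have i1: "y0 x = m11 * (m22 * y0 x - m12 * p0 x) + m12 * (m11 * p0 x - m21 * y0 x)"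
    using d by algebra
  have i2: "y1 x = m11 * (m22 * y1 x - m12 * p1 x) + m12 * (m11 * p1 x - m21 * y1 x)"
    using d by algebra
  have i3: "p0 x = m21 * (m22 * y0 x - m12 * p0 x) + m22 * (m11 * p0 x - m21 * y0 x)"
    using d by algebra
  have i4: "p1 x = m21 * (m22 * y1 x - m12 * p1 x) + m22 * (m11 * p1 x - m21 * y1 x)"
    using d by algebra
  have "y0 x = m11 * s + m12 * 0" using i1 unfolding A Cz .
  moreover have "y1 x = m11 * 0 + m12 * s" using i2 unfolding Bz Dd .
  moreover have "p0 x = m21 * s + m22 * 0" using i3 unfolding A Cz .
  moreover have "p1 x = m21 * 0 + m22 * s" using i4 unfolding Bz Dd .
  ultimately show "y0 x = s * m11 \<and> y1 x = s * m12 \<and> p0 x = s * m21 \<and> p1 x = s * m22"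
    by (simp add: mult.commute)
qed


context
  fixes M :: "real^2^2" and \<xi> :: "nat \<Rightarrow> real"
  assumes detM: "det M = 1" and Z: "zz (Dp (M$1$1) (M$1$2) (M$2$1) (M$2$2)) N \<xi>"
begin

interpretation Z: zz "Dp (M$1$1) (M$1$2) (M$2$1) (M$2$2)" N \<xi> by (rule Z)

lemma dM: "M$1$1 * M$2$2 - M$1$2 * M$2$1 = 1" using detM by (simp add: det_2)

lemma listM: "eig_list f q w N (cmat M) (- cid) = map (\<lambda>k. Z.rho k 2) [0..<N]"
  unfolding eig_list_def
proof (rule Z.list_c)
  show "\<bar>2::real\<bar> \<le> 2" by simp
  fix x
  show "is_eigenvalue f q w N (cmat M) (- cid) (complex_of_real x) \<longleftrightarrow> poly (Dp (M$1$1) (M$1$2) (M$2$1) (M$2$2)) x = 2"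
    unfolding eig_iff_det BCM_det[OF detM] of_real_eq_0_iff by simp
  assume px: "poly (Dp (M$1$1) (M$1$2) (M$2$1) (M$2$2)) x = 2"
  have d0: "det (cmat M + - cid ** Phi (complex_of_real x)) = 0" unfolding BCM_det[OF detM] using px by simp
  have eq: "cmat M + - cid ** Phi (complex_of_real x) = 0 \<longleftrightarrow> poly (pderiv (Dp (M$1$1) (M$1$2) (M$2$1) (M$2$2))) x = 0"
    unfolding BCM_zero using Phi_eq_pm[OF dM, of 1 x] px by simp
  show "eig_mult f q w N (cmat M) (- cid) (complex_of_real x) = (if poly (pderiv (Dp (M$1$1) (M$1$2) (M$2$1) (M$2$2))) x = 0 then 2 else 1)"
    using mult_1[OF d0] mult_2 eq by auto
qed

lemma listmM: "eig_list f q w N (cmat (- M)) (- cid) = map (\<lambda>k. Z.rho k (-2)) [0..<N]"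
  unfolding eig_list_def
proof (rule Z.list_c)
  show "\<bar>-2::real\<bar> \<le> 2" by simp
  fix x
  show "is_eigenvalue f q w N (cmat (- M)) (- cid) (complex_of_real x) \<longleftrightarrow> poly (Dp (M$1$1) (M$1$2) (M$2$1) (M$2$2)) x = -2"
    unfolding eig_iff_det BCmM_det[OF detM] of_real_eq_0_iff by (simp add: add_eq_0_iff)
  assume px: "poly (Dp (M$1$1) (M$1$2) (M$2$1) (M$2$2)) x = -2"
  have d0: "det (cmat (- M) + - cid ** Phi (complex_of_real x)) = 0" unfolding BCmM_det[OF detM] using px by simp
  have eq: "cmat (- M) + - cid ** Phi (complex_of_real x) = 0 \<longleftrightarrow> poly (pderiv (Dp (M$1$1) (M$1$2) (M$2$1) (M$2$2))) x = 0"
    unfolding BCmM_zero using Phi_eq_pm[OF dM, of "-1" x] px by simp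
  show "eig_mult f q w N (cmat (- M)) (- cid) (complex_of_real x) = (if poly (pderiv (Dp (M$1$1) (M$1$2) (M$2$1) (M$2$2))) x = 0 then 2 else 1)"
    using mult_1[OF d0] mult_2 eq by auto
qed

lemma listP: assumes sg: "sin \<gamma> \<noteq> 0"
  shows "eig_list f q w N (phase_mat \<gamma> M) (- cid) = map (\<lambda>k. Z.rho k (2 * cos \<gamma>)) [0..<N]"
  unfolding eig_list_def
proof (rule Z.list_c)
  have "(cos \<gamma>)^2 < 1" using sg sin_cos_squared_add[of \<gamma>] by (smt (verit) zero_less_power2)
  then have cs: "\<bar>cos \<gamma>\<bar> < 1" by (simp add: abs_square_less_1)
  then show "\<bar>2 * cos \<gamma>\<bar> \<le> 2" by simp
  fix x
  show "is_eigenvalue f q w N (phase_mat \<gamma> M) (- cid) (complex_of_real x) \<longleftrightarrow> poly (Dp (M$1$1) (M$1$2) (M$2$1) (M$2$2)) x = 2 * cos \<gamma>"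
    unfolding eig_iff_det BCP_det[OF detM] mult_eq_0_iff of_real_eq_0_iff by auto
  assume px: "poly (Dp (M$1$1) (M$1$2) (M$2$1) (M$2$2)) x = 2 * cos \<gamma>"
  have d0: "det (phase_mat \<gamma> M + - cid ** Phi (complex_of_real x)) = 0" unfolding BCP_det[OF detM] using px by simp
  have nd: "poly (pderiv (Dp (M$1$1) (M$1$2) (M$2$1) (M$2$2))) x \<noteq> 0"
  proof -
    have "\<bar>2 * cos \<gamma>\<bar> < 2" using cs by simp
    then show ?thesis using F1'[OF dM, of x] px by auto
  qed
  show "eig_mult f q w N (phase_mat \<gamma> M) (- cid) (complex_of_real x) = (if poly (pderiv (Dp (M$1$1) (M$1$2) (M$2$1) (M$2$2))) x = 0 then 2 else 1)"
    using mult_1[OF d0 BCP_nz[OF detM sg]] nd by simp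
qed

end

end


context zz
begin

lemma side_left:
  assumes j: "j < N" and r: "\<xi> j \<le> r" "r \<le> \<xi> (Suc j)" and le: "r \<le> rho j 0"
    and big: "\<bar>poly p r\<bar> \<ge> 2" and c: "\<bar>c\<bar> \<le> 2"
  shows "r \<le> rho j c"
proof -
  have c0: "\<bar>0::real\<bar> \<le> 2" by simp
  have h: "if even j then poly p r \<ge> 0 else poly p r \<le> 0" using in_piece_cmp[OF j c0 r] le by simp
  show ?thesis
  proof (cases "even j")
    case True
    then have "poly p r \<ge> c" using h big c by auto
    then show ?thesis using in_piece_cmp[OF j c r] True by simp
  next
    case False
    then have "poly p r \<le> c" using h big c by auto
    then show ?thesis using in_piece_cmp[OF j c r] False by simp
  qed
qed

lemma side_right:
  assumes j: "j < N" and r: "\<xi> j \<le> r" "r \<le> \<xi> (Suc j)" and ge: "rho j 0 \<le> r"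
    and big: "\<bar>poly p r\<bar> \<ge> 2" and c: "\<bar>c\<bar> \<le> 2"
  shows "rho j c \<le> r"
proof (rule ccontr)
  assume "\<not> rho j c \<le> r"
  then have lt: "r < rho j c" by simp
  have c0: "\<bar>0::real\<bar> \<le> 2" by simp
  have ne: "r \<noteq> rho j 0" using rho(3)[OF j c0] big by auto
  then have "\<not> r \<le> rho j 0" using ge by simp
  then have h: "if even j then poly p r < 0 else poly p r > 0" using in_piece_cmp[OF j c0 r] by (auto split: if_splits)
  have h2: "if even j then poly p r \<ge> c else poly p r \<le> c" using in_piece_cmp[OF j c r] lt by simp
  have "poly p r = c" using h h2 big c by (auto split: if_splits)
  then have "rho j c = r" using rho_eq[OF j c r] by simp
  then show False using lt by simp
qed

end

context slp
begin

lemma eigT: "is_eigenvalue f q w N (TK_A K) (TK_B K) (of_real x) \<longleftrightarrow> poly (Cp (K$1$1) (K$2$1)) x = 0"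
  unfolding eig_iff_det BCT_det by simp

lemma multT: "poly (Cp (K$1$1) (K$2$1)) x = 0 \<Longrightarrow> eig_mult f q w N (TK_A K) (TK_B K) (of_real x) = 1"
  using mult_1[OF _ BCT_nz] BCT_det by simp

lemma listT_generic:
  assumes sm: "\<And>i j. a \<le> i \<Longrightarrow> i < j \<Longrightarrow> j < b \<Longrightarrow> r i < r j"
    and roots: "{x. poly (Cp (K$1$1) (K$2$1)) x = 0} = r ` {a..<b}"
  shows "eig_list f q w N (TK_A K) (TK_B K) = map r [a..<b]"
  unfolding eig_list_def
proof (rule eig_list_generic)
  have ss: "sorted_wrt (<) (map r [a..<b])" unfolding sorted_wrt_iff_nth_less by (auto intro!: sm)
  then show "sorted (map r [a..<b])" by (simp add: strict_sorted_iff)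
  show "{x. is_eigenvalue f q w N (TK_A K) (TK_B K) (complex_of_real x)} = set (map r [a..<b])"
    unfolding eigT using roots by auto
  have dist: "distinct (map r [a..<b])" using ss by (simp add: strict_sorted_iff)
  show "\<forall>x\<in>set (map r [a..<b]). eig_mult f q w N (TK_A K) (TK_B K) (complex_of_real x) = count (mset (map r [a..<b])) x"
  proof
    fix x assume x: "x \<in> set (map r [a..<b])"
    then have "poly (Cp (K$1$1) (K$2$1)) x = 0" using roots by auto
    then have "eig_mult f q w N (TK_A K) (TK_B K) (complex_of_real x) = 1" by (rule multT)
    moreover have "count (mset (map r [a..<b])) x = 1" using dist x by (simp add: distinct_count_atmost_1)
    ultimately show "eig_mult f q w N (TK_A K) (TK_B K) (complex_of_real x) = count (mset (map r [a..<b])) x" by simp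
  qed
qed

end


context zz
begin

lemma rho_mono: assumes "i \<le> j" "j < N" "\<bar>c\<bar> \<le> 2" shows "rho i c \<le> rho j c"
  using assms
proof (induction j)
  case 0 then show ?case by simp
next
  case (Suc j)
  show ?case
  proof (cases "i = Suc j")
    case True then show ?thesis by simp
  next
    case False
    then have "rho i c \<le> rho j c" using Suc by simp
    also have "rho j c \<le> rho (Suc j) c" using rho_sorted Suc by simp
    finally show ?thesis .
  qed
qed

lemma rho0_lt: assumes "i < j" "j < N" shows "rho i 0 < rho j 0"
proof -
  have c: "\<bar>0::real\<bar> < 2" by simp
  have "rho i 0 < \<xi> (Suc i)" using rho_strict[OF _ c, of i] assms by simp
  also have "\<xi> (Suc i) \<le> \<xi> j" using assms by (intro xmono_le) auto
  also have "\<xi> j < rho j 0" using rho_strict[OF _ c, of j] assms by simp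
  finally show ?thesis .
qed

end

context slp
begin

context
  fixes M :: "real^2^2" and \<xi> :: "nat \<Rightarrow> real"
  assumes detM: "det M = 1" and Z: "zz (Dp (M$1$1) (M$1$2) (M$2$1) (M$2$2)) N \<xi>"
begin

interpretation Z: zz "Dp (M$1$1) (M$1$2) (M$2$1) (M$2$2)" N \<xi> by (rule Z)

abbreviation "pp \<equiv> Dp (M$1$1) (M$1$2) (M$2$1) (M$2$2)"
abbreviation "EE \<equiv> Cp (M$1$1) (M$2$1)"

lemma dM': "M$1$1 * M$2$2 - M$1$2 * M$2$1 = 1" using detM by (simp add: det_2)

lemma E_sign: "k < N \<Longrightarrow> (-1)^k * poly EE (Z.rho k 0) < 0"
proof -
  assume k: "k < N"
  have c: "\<bar>0::real\<bar> < 2" by simp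
  have r: "\<xi> k < Z.rho k 0" "Z.rho k 0 < \<xi> (Suc k)" using Z.rho_strict[OF k c] by auto
  have d: "if even k then poly (pderiv pp) (Z.rho k 0) < 0 else poly (pderiv pp) (Z.rho k 0) > 0"
    using Z.sgn k r by blast
  have "poly EE (Z.rho k 0) * poly (pderiv pp) (Z.rho k 0) > 0"
    using F1'[OF dM', of "Z.rho k 0"] Z.rho(3)[OF k, of 0] by simp
  then show ?thesis using d by (cases "even k") (auto simp: zero_less_mult_iff)
qed

lemma E_gap: "poly EE r = 0 \<Longrightarrow> \<bar>poly pp r\<bar> \<ge> 2"
  using c_zero_gap[of "M$1$1" "M$2$2" "M$1$2" "M$2$1" r] dM' Dp_eval[of "M$1$1" "M$2$2" "M$1$2" "M$2$1" r]
  by (simp add: aa_def cc_def dd_def)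

lemma inner_root: assumes k: "k \<in> {1..<N}"
  shows "\<exists>r. Z.rho (k - 1) 0 < r \<and> r < Z.rho k 0 \<and> poly EE r = 0"
proof -
  have lt: "Z.rho (k - 1) 0 < Z.rho k 0" using k by (intro Z.rho0_lt) auto
  have "k - 1 < N" using k by auto
  then have s1: "(-1)^(k - 1) * poly EE (Z.rho (k - 1) 0) < 0" by (rule E_sign)
  have s2: "(-1)^k * poly EE (Z.rho k 0) < 0" using E_sign k by simp
  have "(-1::real)^k = - ((-1)^(k - 1))" using k by (cases k) auto
  then have "poly EE (Z.rho (k - 1) 0) * poly EE (Z.rho k 0) < 0"
    using s1 s2 by (cases "even (k - 1)") (auto simp: mult_less_0_iff)
  then show ?thesis using poly_IVT[OF lt] by blast
qed

lemma inner_bounds: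
  assumes k: "k \<in> {1..<N}" and r: "Z.rho (k - 1) 0 < r" "r < Z.rho k 0" and big: "\<bar>poly pp r\<bar> \<ge> 2"
    and c: "\<bar>c\<bar> \<le> 2"
  shows "Z.rho (k - 1) c \<le> r \<and> r \<le> Z.rho k c"
proof -
  have c0: "\<bar>0::real\<bar> \<le> 2" by simp
  have k1: "k - 1 < N" "Suc (k - 1) = k" "k < N" using k by auto
  show ?thesis
  proof (cases "r \<le> \<xi> k")
    case True
    have "\<xi> (k - 1) \<le> r" using Z.rho(1)[OF k1(1) c0] r by simp
    then have "Z.rho (k - 1) c \<le> r" using Z.side_right[OF k1(1) _ _ _ big c] True r k1(2) by simp
    moreover have "r \<le> Z.rho k c" using True Z.rho(1)[OF k1(3) c] by simp
    ultimately show ?thesis by simp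
  next
    case False
    have "r \<le> \<xi> (Suc k)" using Z.rho(2)[OF k1(3) c0] r by simp
    then have "r \<le> Z.rho k c" using Z.side_left[OF k1(3) _ _ _ big c] False r by simp
    moreover have "Z.rho (k - 1) c \<le> r" using False Z.rho(2)[OF k1(1) c] k1(2) by simp
    ultimately show ?thesis by simp
  qed
qed

lemma left_bounds:
  assumes r: "r < Z.rho 0 0" and big: "\<bar>poly pp r\<bar> \<ge> 2" and c: "\<bar>c\<bar> \<le> 2"
  shows "r \<le> Z.rho 0 c"
proof -
  have N0: "0 < N" using N2 by simp
  have c0: "\<bar>0::real\<bar> \<le> 2" by simp
  show ?thesis
  proof (cases "r \<le> \<xi> 0")
    case True then show ?thesis using Z.rho(1)[OF N0 c] by simp
  next
    case False
    have "r \<le> \<xi> (Suc 0)" using Z.rho(2)[OF N0 c0] r by simp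
    then show ?thesis using Z.side_left[OF N0 _ _ _ big c] False r by simp
  qed
qed

lemma right_bounds:
  assumes r: "Z.rho (N - 1) 0 < r" and big: "\<bar>poly pp r\<bar> \<ge> 2" and c: "\<bar>c\<bar> \<le> 2"
  shows "Z.rho (N - 1) c \<le> r"
proof -
  have N0: "N - 1 < N" "Suc (N - 1) = N" using N2 by auto
  have c0: "\<bar>0::real\<bar> \<le> 2" by simp
  show ?thesis
  proof (cases "r \<ge> \<xi> N")
    case True then show ?thesis using Z.rho(2)[OF N0(1) c] N0(2) by simp
  next
    case False
    have "\<xi> (N - 1) \<le> r" using Z.rho(1)[OF N0(1) c0] r by simp
    then show ?thesis using Z.side_right[OF N0(1) _ _ _ big c] False r N0(2) by simp
  qed
qed

end

end


context slp
begin

context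
  fixes M :: "real^2^2" and \<xi> :: "nat \<Rightarrow> real" and K :: "real^2^2"
  assumes detM: "det M = 1" and Z: "zz (Dp (M$1$1) (M$1$2) (M$2$1) (M$2$2)) N \<xi>"
    and rK: "\<forall>x. poly (Cp (K$1$1) (K$2$1)) x = 0 \<longleftrightarrow> poly (Cp (M$1$1) (M$2$1)) x = 0"
begin

interpretation Z: zz "Dp (M$1$1) (M$1$2) (M$2$1) (M$2$2)" N \<xi> by (rule Z)

lemmas E_sign' = E_sign[OF detM Z] and E_gap' = E_gap[OF detM Z] and inner_root' = inner_root[OF detM Z]
  and inner_bounds' = inner_bounds[OF detM Z] and left_bounds' = left_bounds[OF detM Z]
  and right_bounds' = right_bounds[OF detM Z]

lemma inner_roots_choice:
  obtains ri where "\<And>k. k \<in> {1..<N} \<Longrightarrow> Z.rho (k - 1) 0 < ri k \<and> ri k < Z.rho k 0 \<and> poly (Cp (M$1$1) (M$2$1)) (ri k) = 0"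
proof -
  have "\<forall>k\<in>{1..<N}. \<exists>r. Z.rho (k - 1) 0 < r \<and> r < Z.rho k 0 \<and> poly (Cp (M$1$1) (M$2$1)) r = 0"
    using inner_root' by blast
  then obtain ri where "\<forall>k\<in>{1..<N}. Z.rho (k - 1) 0 < ri k \<and> ri k < Z.rho k 0 \<and> poly (Cp (M$1$1) (M$2$1)) (ri k) = 0"
    by metis
  then show ?thesis using that by blast
qed

lemma roots_exact:
  assumes E0: "Cp (M$1$1) (M$2$1) \<noteq> 0" and deg: "degree (Cp (M$1$1) (M$2$1)) \<le> b - a"
    and sm: "\<And>i j. a \<le> i \<Longrightarrow> i < j \<Longrightarrow> j < b \<Longrightarrow> r i < r j"
    and rr: "\<And>k. a \<le> k \<Longrightarrow> k < b \<Longrightarrow> poly (Cp (M$1$1) (M$2$1)) (r k) = 0"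
  shows "{x. poly (Cp (K$1$1) (K$2$1)) x = 0} = r ` {a..<b}"
proof -
  define S where "S = {x. poly (Cp (M$1$1) (M$2$1)) x = 0}"
  have finS: "finite S" unfolding S_def using poly_roots_finite[OF E0] .
  have cS: "card S \<le> b - a" unfolding S_def using card_poly_roots_bound[OF E0] deg by simp
  have sub: "r ` {a..<b} \<subseteq> S" using rr by (auto simp: S_def)
  have inj: "inj_on r {a..<b}"
    by (rule inj_onI) (metis atLeastLessThan_iff less_irrefl nat_neq_iff sm)
  have "card (r ` {a..<b}) = b - a" using card_image[OF inj] by simp
  then have "r ` {a..<b} = S" using card_subset_eq[OF finS sub] cS card_mono[OF finS sub] by simp
  then show ?thesis using rK by (simp add: S_def)
qed

lemma T_i:
  assumes fm: "f 0 * M$1$1 > 0" and Pfp: "Pf > 0"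
  shows "\<exists>r. eig_list f q w N (TK_A K) (TK_B K) = map r [0..<N]
    \<and> (\<forall>j<N. \<forall>c. \<bar>c\<bar> \<le> 2 \<longrightarrow> r j \<le> Z.rho j c)
    \<and> (\<forall>j. j + 2 \<le> N \<longrightarrow> (\<forall>c. \<bar>c\<bar> \<le> 2 \<longrightarrow> Z.rho j c \<le> r (Suc j)))"
proof -
  define E where "E = Cp (M$1$1) (M$2$1)"
  have cE: "(-1)^N * coeff E N > 0" unfolding E_def coeff_Cp using Pw_pos Pfp fm
    by (simp add: mult.assoc)
  then have cnz: "coeff E N \<noteq> 0" by auto
  have degE: "degree E = N" using deg_Cp[of "M$1$1" "M$2$1"] le_degree[OF cnz] by (simp add: E_def)
  have E0: "E \<noteq> 0" using cnz by auto
  have N0: "0 < N" using N2 by simp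
  obtain R0 where R0: "\<forall>x\<le>R0. poly E x > 0" using poly_neg_inf[of E 0] degE N2 cE by auto
  define R where "R = min R0 (Z.rho 0 0 - 1)"
  have ER: "poly E R > 0" using R0 by (simp add: R_def)
  have E00: "poly E (Z.rho 0 0) < 0" using E_sign'[OF N0] by (simp add: E_def)
  have Rlt: "R < Z.rho 0 0" by (simp add: R_def)
  obtain r0 where r0: "R < r0" "r0 < Z.rho 0 0" "poly E r0 = 0"
    using poly_IVT_neg[OF Rlt ER E00] by blast
  obtain ri where ri: "\<And>k. k \<in> {1..<N} \<Longrightarrow> Z.rho (k - 1) 0 < ri k \<and> ri k < Z.rho k 0 \<and> poly E (ri k) = 0"
    using inner_roots_choice unfolding E_def by blast
  define r where "r k = (if k = 0 then r0 else ri k)" for k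
  have rlt: "r k < Z.rho k 0" if "k < N" for k using that r0 ri[of k] by (cases "k = 0") (auto simp: r_def)
  have rgt: "Z.rho (k - 1) 0 < r k" if "k \<in> {1..<N}" for k using that ri[of k] by (auto simp: r_def)
  have rroot: "poly E (r k) = 0" if "k < N" for k using that r0 ri[of k] by (cases "k = 0") (auto simp: r_def)
  have sm: "r i < r j" if "0 \<le> i" "i < j" "j < N" for i j
  proof -
    have "r i < Z.rho i 0" using rlt that by simp
    also have "Z.rho i 0 \<le> Z.rho (j - 1) 0" using that by (intro Z.rho_mono) auto
    also have "Z.rho (j - 1) 0 < r j" using rgt that by simp
    finally show ?thesis .
  qed
  have roots: "{x. poly (Cp (K$1$1) (K$2$1)) x = 0} = r ` {0..<N}"
  proof (rule roots_exact)
    show "Cp (M$1$1) (M$2$1) \<noteq> 0" using E0 by (simp add: E_def)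
    show "degree (Cp (M$1$1) (M$2$1)) \<le> N - 0" using degE by (simp add: E_def)
    show "\<And>i j. 0 \<le> i \<Longrightarrow> i < j \<Longrightarrow> j < N \<Longrightarrow> r i < r j" by (rule sm)
    show "\<And>k. 0 \<le> k \<Longrightarrow> k < N \<Longrightarrow> poly (Cp (M$1$1) (M$2$1)) (r k) = 0" using rroot by (simp add: E_def)
  qed
  have L: "eig_list f q w N (TK_A K) (TK_B K) = map r [0..<N]"
    using listT_generic[of 0 N r K] sm roots by simp
  have b1: "\<forall>j<N. \<forall>c. \<bar>c\<bar> \<le> 2 \<longrightarrow> r j \<le> Z.rho j c"
  proof (intro allI impI)
    fix j c assume j: "j < N" and c: "\<bar>c\<bar> \<le> (2::real)"
    have big: "\<bar>poly (Dp (M$1$1) (M$1$2) (M$2$1) (M$2$2)) (r j)\<bar> \<ge> 2" using E_gap' rroot[OF j] by (simp add: E_def)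
    show "r j \<le> Z.rho j c"
    proof (cases "j = 0")
      case True then show ?thesis using left_bounds'[OF _ big c] rlt j by simp
    next
      case False then show ?thesis using inner_bounds'[of j "r j", OF _ _ _ big c] rlt[OF j] rgt[of j] j by auto
    qed
  qed
  have b2: "\<forall>j. j + 2 \<le> N \<longrightarrow> (\<forall>c. \<bar>c\<bar> \<le> 2 \<longrightarrow> Z.rho j c \<le> r (Suc j))"
  proof (intro allI impI)
    fix j c assume j: "j + 2 \<le> N" and c: "\<bar>c\<bar> \<le> (2::real)"
    have k: "Suc j \<in> {1..<N}" using j by auto
    have big: "\<bar>poly (Dp (M$1$1) (M$1$2) (M$2$1) (M$2$2)) (r (Suc j))\<bar> \<ge> 2" using E_gap' rroot[of "Suc j"] j by (simp add: E_def)
    show "Z.rho j c \<le> r (Suc j)" using inner_bounds'[OF k _ _ big c] rlt[of "Suc j"] rgt[OF k] j by simp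
  qed
  show ?thesis using L b1 b2 by blast
qed


lemma T_ii:
  assumes fm: "f 0 * M$1$1 < 0" and Pfp: "Pf > 0"
  shows "\<exists>r. eig_list f q w N (TK_A K) (TK_B K) = map r [1..<Suc N]
    \<and> (\<forall>j. j + 2 \<le> N \<longrightarrow> (\<forall>c. \<bar>c\<bar> \<le> 2 \<longrightarrow> Z.rho j c \<le> r (Suc j) \<and> r (Suc j) \<le> Z.rho (Suc j) c))
    \<and> (\<forall>c. \<bar>c\<bar> \<le> 2 \<longrightarrow> Z.rho (N - 1) c \<le> r N)"
proof -
  define E where "E = Cp (M$1$1) (M$2$1)"
  have cE: "(-1)^N * coeff E N < 0" unfolding E_def coeff_Cp using Pw_pos Pfp fm
    by (simp add: mult.assoc mult_pos_neg)
  then have cnz: "coeff E N \<noteq> 0" by auto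
  have degE: "degree E = N" using deg_Cp[of "M$1$1" "M$2$1"] le_degree[OF cnz] by (simp add: E_def)
  have E0: "E \<noteq> 0" using cnz by auto
  define E' where "E' = smult ((-1)^Suc N) E"
  have dE': "degree E' = N" using degE by (simp add: E'_def)
  have lE': "lead_coeff E' > 0" using cE dE' degE by (simp add: E'_def)
  obtain R0 where R0: "\<forall>x\<ge>R0. poly E' x > 0" using poly_pos_inf[of E' 0] dE' N2 lE' by auto
  have N1: "N - 1 < N" using N2 by simp
  define R where "R = max R0 (Z.rho (N - 1) 0 + 1)"
  have ER: "poly E' R > 0" using R0 by (simp add: R_def)
  have sN: "(-1::real)^Suc N = (-1)^(N - 1)" using N2 by (cases N) auto
  have E00: "poly E' (Z.rho (N - 1) 0) < 0" using E_sign'[OF N1] sN by (simp add: E_def E'_def)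
  have Rlt: "Z.rho (N - 1) 0 < R" by (simp add: R_def)
  obtain rN where rN: "Z.rho (N - 1) 0 < rN" "rN < R" "poly E' rN = 0"
    using poly_IVT_pos[OF Rlt E00 ER] by blast
  have rN0: "poly E rN = 0" using rN(3) by (simp add: E'_def)
  obtain ri where ri: "\<And>k. k \<in> {1..<N} \<Longrightarrow> Z.rho (k - 1) 0 < ri k \<and> ri k < Z.rho k 0 \<and> poly E (ri k) = 0"
    using inner_roots_choice unfolding E_def by blast
  define r where "r k = (if k = N then rN else ri k)" for k
  have rlt: "r k < Z.rho k 0" if "k \<in> {1..<N}" for k using that ri[of k] by (auto simp: r_def)
  have rgt: "Z.rho (k - 1) 0 < r k" if "1 \<le> k" "k \<le> N" for k
    using that ri[of k] rN by (cases "k = N") (auto simp: r_def)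
  have rroot: "poly E (r k) = 0" if "1 \<le> k" "k \<le> N" for k using that rN0 ri[of k] by (cases "k = N") (auto simp: r_def)
  have sm: "r i < r j" if "1 \<le> i" "i < j" "j < Suc N" for i j
  proof -
    have "r i < Z.rho i 0" using rlt that by simp
    also have "Z.rho i 0 \<le> Z.rho (j - 1) 0" using that by (intro Z.rho_mono) auto
    also have "Z.rho (j - 1) 0 < r j" using rgt that by simp
    finally show ?thesis .
  qed
  have roots: "{x. poly (Cp (K$1$1) (K$2$1)) x = 0} = r ` {1..<Suc N}"
  proof (rule roots_exact)
    show "Cp (M$1$1) (M$2$1) \<noteq> 0" using E0 by (simp add: E_def)
    show "degree (Cp (M$1$1) (M$2$1)) \<le> Suc N - 1" using degE by (simp add: E_def)
    show "\<And>i j. 1 \<le> i \<Longrightarrow> i < j \<Longrightarrow> j < Suc N \<Longrightarrow> r i < r j" by (rule sm)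
    show "\<And>k. 1 \<le> k \<Longrightarrow> k < Suc N \<Longrightarrow> poly (Cp (M$1$1) (M$2$1)) (r k) = 0" using rroot by (simp add: E_def)
  qed
  have L: "eig_list f q w N (TK_A K) (TK_B K) = map r [1..<Suc N]"
    using listT_generic[of 1 "Suc N" r K] sm roots by simp
  have b1: "\<forall>j. j + 2 \<le> N \<longrightarrow> (\<forall>c. \<bar>c\<bar> \<le> 2 \<longrightarrow> Z.rho j c \<le> r (Suc j) \<and> r (Suc j) \<le> Z.rho (Suc j) c)"
  proof (intro allI impI)
    fix j c assume j: "j + 2 \<le> N" and c: "\<bar>c\<bar> \<le> (2::real)"
    have k: "Suc j \<in> {1..<N}" using j by auto
    have big: "\<bar>poly (Dp (M$1$1) (M$1$2) (M$2$1) (M$2$2)) (r (Suc j))\<bar> \<ge> 2" using E_gap' rroot[of "Suc j"] j by (simp add: E_def)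
    show "Z.rho j c \<le> r (Suc j) \<and> r (Suc j) \<le> Z.rho (Suc j) c"
      using inner_bounds'[OF k _ _ big c] rlt[OF k] rgt[of "Suc j"] j by simp
  qed
  have b2: "\<forall>c. \<bar>c\<bar> \<le> 2 \<longrightarrow> Z.rho (N - 1) c \<le> r N"
  proof (intro allI impI)
    fix c assume c: "\<bar>c\<bar> \<le> (2::real)"
    have big: "\<bar>poly (Dp (M$1$1) (M$1$2) (M$2$1) (M$2$2)) (r N)\<bar> \<ge> 2" using E_gap' rroot[of N] N2 by (simp add: E_def)
    show "Z.rho (N - 1) c \<le> r N" using right_bounds'[OF _ big c] rgt[of N] N2 by simp
  qed
  show ?thesis using L b1 b2 by blast
qed

lemma T_iii:
  assumes m0: "M$1$1 = 0"
  shows "\<exists>r. eig_list f q w N (TK_A K) (TK_B K) = map r [1..<N]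
    \<and> (\<forall>j. j + 2 \<le> N \<longrightarrow> (\<forall>c. \<bar>c\<bar> \<le> 2 \<longrightarrow> Z.rho j c \<le> r (Suc j) \<and> r (Suc j) \<le> Z.rho (Suc j) c))"
proof -
  define E where "E = Cp (M$1$1) (M$2$1)"
  have m21: "M$2$1 \<noteq> 0" using dM'[OF detM Z] m0 by auto
  have cE: "coeff E (N - 1) \<noteq> 0" unfolding E_def m0 coeff_Cp0 using m21 L_nz by simp
  have degE: "degree E \<le> N - 1" unfolding E_def m0 by (rule deg_Cp0)
  have E0: "E \<noteq> 0" using cE by auto
  obtain ri where ri: "\<And>k. k \<in> {1..<N} \<Longrightarrow> Z.rho (k - 1) 0 < ri k \<and> ri k < Z.rho k 0 \<and> poly E (ri k) = 0"
    using inner_roots_choice unfolding E_def by blast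
  define r where "r = ri"
  have rlt: "r k < Z.rho k 0" if "k \<in> {1..<N}" for k using that ri[of k] by (auto simp: r_def)
  have rgt: "Z.rho (k - 1) 0 < r k" if "k \<in> {1..<N}" for k using that ri[of k] by (auto simp: r_def)
  have rroot: "poly E (r k) = 0" if "k \<in> {1..<N}" for k using that ri[of k] by (auto simp: r_def)
  have sm: "r i < r j" if "1 \<le> i" "i < j" "j < N" for i j
  proof -
    have "r i < Z.rho i 0" using rlt that by simp
    also have "Z.rho i 0 \<le> Z.rho (j - 1) 0" using that by (intro Z.rho_mono) auto
    also have "Z.rho (j - 1) 0 < r j" using rgt that by simp
    finally show ?thesis .
  qed
  have roots: "{x. poly (Cp (K$1$1) (K$2$1)) x = 0} = r ` {1..<N}"
  proof (rule roots_exact)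
    show "Cp (M$1$1) (M$2$1) \<noteq> 0" using E0 by (simp add: E_def)
    show "degree (Cp (M$1$1) (M$2$1)) \<le> N - 1" using degE by (simp add: E_def)
    show "\<And>i j. 1 \<le> i \<Longrightarrow> i < j \<Longrightarrow> j < N \<Longrightarrow> r i < r j" by (rule sm)
    show "\<And>k. 1 \<le> k \<Longrightarrow> k < N \<Longrightarrow> poly (Cp (M$1$1) (M$2$1)) (r k) = 0" using rroot by (simp add: E_def)
  qed
  have L: "eig_list f q w N (TK_A K) (TK_B K) = map r [1..<N]"
    using listT_generic[of 1 N r K] sm roots by simp
  have b1: "\<forall>j. j + 2 \<le> N \<longrightarrow> (\<forall>c. \<bar>c\<bar> \<le> 2 \<longrightarrow> Z.rho j c \<le> r (Suc j) \<and> r (Suc j) \<le> Z.rho (Suc j) c)"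
  proof (intro allI impI)
    fix j c assume j: "j + 2 \<le> N" and c: "\<bar>c\<bar> \<le> (2::real)"
    have k: "Suc j \<in> {1..<N}" using j by auto
    have big: "\<bar>poly (Dp (M$1$1) (M$1$2) (M$2$1) (M$2$2)) (r (Suc j))\<bar> \<ge> 2" using E_gap' rroot[OF k] by (simp add: E_def)
    show "Z.rho j c \<le> r (Suc j) \<and> r (Suc j) \<le> Z.rho (Suc j) c"
      using inner_bounds'[OF k _ _ big c] rlt[OF k] rgt[OF k] j by simp
  qed
  show ?thesis using L b1 by blast
qed

end

end


context slp
begin

lemma final_M:
  assumes detM: "det M = 1" and pos: "M$1$1 - f 0 * M$1$2 > 0" and Pfp: "Pf > 0" and sg: "sin \<gamma> \<noteq> 0"
    and rK: "\<forall>x. poly (Cp (K$1$1) (K$2$1)) x = 0 \<longleftrightarrow> poly (Cp (M$1$1) (M$2$1)) x = 0"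
  defines "lam \<equiv> (\<lambda>j. eigval f q w N (cmat M) (- cid) j)"
    and "lamm \<equiv> (\<lambda>j. eigval f q w N (cmat (- M)) (- cid) j)"
    and "lamg \<equiv> (\<lambda>j. eigval f q w N (phase_mat \<gamma> M) (- cid) j)"
    and "lamT \<equiv> (\<lambda>j. eigval f q w N (TK_A K) (TK_B K) j)"
  shows "(\<forall>j<N. (even j \<longrightarrow> lam j < lamg j \<and> lamg j < lamm j) \<and> (odd j \<longrightarrow> lamm j < lamg j \<and> lamg j < lam j))"
    and "f 0 * M$1$1 > 0 \<Longrightarrow> (\<forall>j<N. lamT j \<le> min (lam j) (lamm j)) \<and> (\<forall>j. j + 2 \<le> N \<longrightarrow> max (lam j) (lamm j) \<le> lamT (j + 1))"
    and "f 0 * M$1$1 < 0 \<Longrightarrow> (\<forall>j. j + 2 \<le> N \<longrightarrow> max (lam j) (lamm j) \<le> lamT j \<and> lamT j \<le> min (lam (j + 1)) (lamm (j + 1)))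
             \<and> max (lam (N - 1)) (lamm (N - 1)) \<le> lamT (N - 1)"
    and "M$1$1 = 0 \<Longrightarrow> (\<forall>j. j + 2 \<le> N \<longrightarrow> max (lam j) (lamm j) \<le> lamT j \<and> lamT j \<le> min (lam (j + 1)) (lamm (j + 1)))"
proof -
  have dM: "M$1$1 * M$2$2 - M$1$2 * M$2$1 = 1" using detM by (simp add: det_2)
  obtain \<xi> where Z: "zz (Dp (M$1$1) (M$1$2) (M$2$1) (M$2$2)) N \<xi>"
    using exists_zz[OF dM pos Pfp] by blast
  interpret Z: zz "Dp (M$1$1) (M$1$2) (M$2$1) (M$2$2)" N \<xi> by (rule Z)
  have cs: "\<bar>cos \<gamma>\<bar> < 1"
  proof -
    have "(cos \<gamma>)^2 < 1" using sg sin_cos_squared_add[of \<gamma>] by (smt (verit) zero_less_power2)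
    then show ?thesis by (simp add: abs_square_less_1)
  qed
  have c2: "\<bar>2::real\<bar> \<le> 2" "\<bar>-2::real\<bar> \<le> 2" "\<bar>2 * cos \<gamma>\<bar> \<le> 2" using cs by auto
  have l1: "lam j = Z.rho j 2" if "j < N" for j
    using that listM[OF detM Z] by (simp add: lam_def eigval_def)
  have l2: "lamm j = Z.rho j (-2)" if "j < N" for j
    using that listmM[OF detM Z] by (simp add: lamm_def eigval_def)
  have l3: "lamg j = Z.rho j (2 * cos \<gamma>)" if "j < N" for j
    using that listP[OF detM Z sg] by (simp add: lamg_def eigval_def)
  show "\<forall>j<N. (even j \<longrightarrow> lam j < lamg j \<and> lamg j < lamm j) \<and> (odd j \<longrightarrow> lamm j < lamg j \<and> lamg j < lam j)"
  proof (intro allI impI)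
    fix j assume j: "j < N"
    have a1: "2 * cos \<gamma> < 2" "-2 < 2 * cos \<gamma>" using cs by auto
    have A: "if even j then Z.rho j 2 < Z.rho j (2 * cos \<gamma>) else Z.rho j (2 * cos \<gamma>) < Z.rho j 2"
      using Z.rho_anti[OF j c2(3) c2(1) a1(1)] .
    have B: "if even j then Z.rho j (2 * cos \<gamma>) < Z.rho j (-2) else Z.rho j (-2) < Z.rho j (2 * cos \<gamma>)"
      using Z.rho_anti[OF j c2(2) c2(3) a1(2)] .
    show "(even j \<longrightarrow> lam j < lamg j \<and> lamg j < lamm j) \<and> (odd j \<longrightarrow> lamm j < lamg j \<and> lamg j < lam j)"
      using A B l1[OF j] l2[OF j] l3[OF j] by (auto split: if_splits)
  qed
  show "f 0 * M$1$1 > 0 \<Longrightarrow> (\<forall>j<N. lamT j \<le> min (lam j) (lamm j)) \<and> (\<forall>j. j + 2 \<le> N \<longrightarrow> max (lam j) (lamm j) \<le> lamT (j + 1))"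
  proof -
    assume fm: "f 0 * M$1$1 > 0"
    obtain r where r: "eig_list f q w N (TK_A K) (TK_B K) = map r [0..<N]"
      "\<forall>j<N. \<forall>c. \<bar>c\<bar> \<le> 2 \<longrightarrow> r j \<le> Z.rho j c"
      "\<forall>j. j + 2 \<le> N \<longrightarrow> (\<forall>c. \<bar>c\<bar> \<le> 2 \<longrightarrow> Z.rho j c \<le> r (Suc j))"
      using T_i[OF detM Z rK fm Pfp] by blast
    have lT: "lamT j = r j" if "j < N" for j using that r(1) by (simp add: lamT_def eigval_def)
    show ?thesis
    proof
      show "\<forall>j<N. lamT j \<le> min (lam j) (lamm j)"
        using r(2) c2 lT l1 l2 by simp
      show "\<forall>j. j + 2 \<le> N \<longrightarrow> max (lam j) (lamm j) \<le> lamT (j + 1)"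
        using r(3) c2 lT l1 l2 by simp
    qed
  qed
  show "f 0 * M$1$1 < 0 \<Longrightarrow> (\<forall>j. j + 2 \<le> N \<longrightarrow> max (lam j) (lamm j) \<le> lamT j \<and> lamT j \<le> min (lam (j + 1)) (lamm (j + 1)))
             \<and> max (lam (N - 1)) (lamm (N - 1)) \<le> lamT (N - 1)"
  proof -
    assume fm: "f 0 * M$1$1 < 0"
    obtain r where r: "eig_list f q w N (TK_A K) (TK_B K) = map r [1..<Suc N]"
      "\<forall>j. j + 2 \<le> N \<longrightarrow> (\<forall>c. \<bar>c\<bar> \<le> 2 \<longrightarrow> Z.rho j c \<le> r (Suc j) \<and> r (Suc j) \<le> Z.rho (Suc j) c)"
      "\<forall>c. \<bar>c\<bar> \<le> 2 \<longrightarrow> Z.rho (N - 1) c \<le> r N"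
      using T_ii[OF detM Z rK fm Pfp] by blast
    have lT: "lamT j = r (Suc j)" if "j < N" for j
      using that r(1) by (simp del: upt_Suc add: lamT_def eigval_def nth_map_upt)
    have N1: "N - 1 < N" "Suc (N - 1) = N" using N2 by auto
    show ?thesis
    proof
      show "\<forall>j. j + 2 \<le> N \<longrightarrow> max (lam j) (lamm j) \<le> lamT j \<and> lamT j \<le> min (lam (j + 1)) (lamm (j + 1))"
        using r(2) c2 lT l1 l2 by simp
      show "max (lam (N - 1)) (lamm (N - 1)) \<le> lamT (N - 1)"
        using r(3) c2 lT[OF N1(1)] l1[OF N1(1)] l2[OF N1(1)] N1(2) by simp
    qed
  qed
  show "M$1$1 = 0 \<Longrightarrow> (\<forall>j. j + 2 \<le> N \<longrightarrow> max (lam j) (lamm j) \<le> lamT j \<and> lamT j \<le> min (lam (j + 1)) (lamm (j + 1)))"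
  proof -
    assume m0: "M$1$1 = 0"
    obtain r where r: "eig_list f q w N (TK_A K) (TK_B K) = map r [1..<N]"
      "\<forall>j. j + 2 \<le> N \<longrightarrow> (\<forall>c. \<bar>c\<bar> \<le> 2 \<longrightarrow> Z.rho j c \<le> r (Suc j) \<and> r (Suc j) \<le> Z.rho (Suc j) c)"
      using T_iii[OF detM Z rK m0] by blast
    have lT: "lamT j = r (Suc j)" if "j + 2 \<le> N" for j using that r(1) by (simp add: lamT_def eigval_def)
    show ?thesis using r(2) c2 lT l1 l2 by simp
  qed
qed

end

theorem theorem3p10:
  fixes f q w :: "nat \<Rightarrow> real" and N :: nat and \<gamma> :: real and K :: "real^2^2"
  assumes N2: "N \<ge> 2"
    and f_nz: "\<forall>n\<le>N. f n \<noteq> 0"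
    and w_pos: "\<forall>n\<in>{1..N}. w n > 0"
    and f_prod: "(\<Prod>i<N. 1 / f i) > 0"
    and gamma: "\<gamma> \<in> {-pi<..<0} \<union> {0<..<pi}"
    and K_SL: "det K = 1"
    and K_cond: "K $ 1 $ 1 - f 0 * K $ 1 $ 2 \<noteq> 0"
  shows "\<forall>M \<in> {K, -K}.
    (let lam = (\<lambda>j. eigval f q w N (cmat M) (- cid) j);
         lamm = (\<lambda>j. eigval f q w N (cmat (- M)) (- cid) j);
         lamg = (\<lambda>j. eigval f q w N (phase_mat \<gamma> M) (- cid) j);
         lamT = (\<lambda>j. eigval f q w N (TK_A K) (TK_B K) j);
         mn = (\<lambda>j. min (lam j) (lamm j));
         mx = (\<lambda>j. max (lam j) (lamm j));
         P = (\<forall>j<N. (even j \<longrightarrow> lam j < lamg j \<and> lamg j < lamm j)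
                   \<and> (odd j \<longrightarrow> lamm j < lamg j \<and> lamg j < lam j))
     in (M $ 1 $ 1 - f 0 * M $ 1 $ 2 > 0 \<and> f 0 * M $ 1 $ 1 > 0 \<longrightarrow>
           P \<and> (\<forall>j<N. lamT j \<le> mn j) \<and> (\<forall>j. j + 2 \<le> N \<longrightarrow> mx j \<le> lamT (j + 1)))
      \<and> (M $ 1 $ 1 - f 0 * M $ 1 $ 2 > 0 \<and> f 0 * M $ 1 $ 1 < 0 \<longrightarrow>
           P \<and> (\<forall>j. j + 2 \<le> N \<longrightarrow> mx j \<le> lamT j \<and> lamT j \<le> mn (j + 1))
             \<and> mx (N - 1) \<le> lamT (N - 1))
      \<and> (f 0 * M $ 1 $ 2 < 0 \<and> M $ 1 $ 1 = 0 \<longrightarrow>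
           P \<and> (\<forall>j. j + 2 \<le> N \<longrightarrow> mx j \<le> lamT j \<and> lamT j \<le> mn (j + 1))))"
proof
  fix M assume M: "M \<in> {K, -K}"
  interpret S: slp f q w N using N2 f_nz w_pos by unfold_locales auto
  have detM: "det M = 1" using M K_SL by (auto simp: det_2)
  have Pfp: "S.Pf > 0" using f_prod by (simp add: S.Pf_def)
  have sg: "sin \<gamma> \<noteq> 0"
  proof -
    consider "- pi < \<gamma>" "\<gamma> < 0" | "0 < \<gamma>" "\<gamma> < pi" using gamma by auto
    then show ?thesis
    proof cases
      case 1
      then have "sin (- \<gamma>) > 0" by (intro sin_gt_zero) auto
      then show ?thesis by simp
    next
      case 2
      then have "sin \<gamma> > 0" by (intro sin_gt_zero) auto
      then show ?thesis by simp
    qed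
  qed
  have rK: "\<forall>x. poly (S.Cp (K$1$1) (K$2$1)) x = 0 \<longleftrightarrow> poly (S.Cp (M$1$1) (M$2$1)) x = 0"
    using M by (auto simp: S.Cp_def algebra_simps)
  note F = S.final_M[OF detM _ Pfp sg rK]
  show "let lam = (\<lambda>j. eigval f q w N (cmat M) (- cid) j);
         lamm = (\<lambda>j. eigval f q w N (cmat (- M)) (- cid) j);
         lamg = (\<lambda>j. eigval f q w N (phase_mat \<gamma> M) (- cid) j);
         lamT = (\<lambda>j. eigval f q w N (TK_A K) (TK_B K) j);
         mn = (\<lambda>j. min (lam j) (lamm j));
         mx = (\<lambda>j. max (lam j) (lamm j));
         P = (\<forall>j<N. (even j \<longrightarrow> lam j < lamg j \<and> lamg j < lamm j)
                   \<and> (odd j \<longrightarrow> lamm j < lamg j \<and> lamg j < lam j))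
     in (M $ 1 $ 1 - f 0 * M $ 1 $ 2 > 0 \<and> f 0 * M $ 1 $ 1 > 0 \<longrightarrow>
           P \<and> (\<forall>j<N. lamT j \<le> mn j) \<and> (\<forall>j. j + 2 \<le> N \<longrightarrow> mx j \<le> lamT (j + 1)))
      \<and> (M $ 1 $ 1 - f 0 * M $ 1 $ 2 > 0 \<and> f 0 * M $ 1 $ 1 < 0 \<longrightarrow>
           P \<and> (\<forall>j. j + 2 \<le> N \<longrightarrow> mx j \<le> lamT j \<and> lamT j \<le> mn (j + 1))
             \<and> mx (N - 1) \<le> lamT (N - 1))
      \<and> (f 0 * M $ 1 $ 2 < 0 \<and> M $ 1 $ 1 = 0 \<longrightarrow>
           P \<and> (\<forall>j. j + 2 \<le> N \<longrightarrow> mx j \<le> lamT j \<and> lamT j \<le> mn (j + 1)))"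
    unfolding Let_def
  proof (intro conjI impI)
    assume h: "M $ 1 $ 1 - f 0 * M $ 1 $ 2 > 0 \<and> f 0 * M $ 1 $ 1 > 0"
    show "(\<forall>j<N. (even j \<longrightarrow> eigval f q w N (cmat M) (- cid) j < eigval f q w N (phase_mat \<gamma> M) (- cid) j \<and> eigval f q w N (phase_mat \<gamma> M) (- cid) j < eigval f q w N (cmat (- M)) (- cid) j)
                   \<and> (odd j \<longrightarrow> eigval f q w N (cmat (- M)) (- cid) j < eigval f q w N (phase_mat \<gamma> M) (- cid) j \<and> eigval f q w N (phase_mat \<gamma> M) (- cid) j < eigval f q w N (cmat M) (- cid) j))"
      using F(1) h by blast
    show "\<forall>j<N. eigval f q w N (TK_A K) (TK_B K) j \<le> min (eigval f q w N (cmat M) (- cid) j) (eigval f q w N (cmat (- M)) (- cid) j)"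
      using F(2) h by blast
    show "\<forall>j. j + 2 \<le> N \<longrightarrow> max (eigval f q w N (cmat M) (- cid) j) (eigval f q w N (cmat (- M)) (- cid) j) \<le> eigval f q w N (TK_A K) (TK_B K) (j + 1)"
      using F(2) h by blast
  next
    assume h: "M $ 1 $ 1 - f 0 * M $ 1 $ 2 > 0 \<and> f 0 * M $ 1 $ 1 < 0"
    show "(\<forall>j<N. (even j \<longrightarrow> eigval f q w N (cmat M) (- cid) j < eigval f q w N (phase_mat \<gamma> M) (- cid) j \<and> eigval f q w N (phase_mat \<gamma> M) (- cid) j < eigval f q w N (cmat (- M)) (- cid) j)
                   \<and> (odd j \<longrightarrow> eigval f q w N (cmat (- M)) (- cid) j < eigval f q w N (phase_mat \<gamma> M) (- cid) j \<and> eigval f q w N (phase_mat \<gamma> M) (- cid) j < eigval f q w N (cmat M) (- cid) j))"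
      using F(1) h by blast
    show "\<forall>j. j + 2 \<le> N \<longrightarrow> max (eigval f q w N (cmat M) (- cid) j) (eigval f q w N (cmat (- M)) (- cid) j) \<le> eigval f q w N (TK_A K) (TK_B K) j \<and>
              eigval f q w N (TK_A K) (TK_B K) j \<le> min (eigval f q w N (cmat M) (- cid) (j + 1)) (eigval f q w N (cmat (- M)) (- cid) (j + 1))"
      using F(3) h by blast
    show "max (eigval f q w N (cmat M) (- cid) (N - 1)) (eigval f q w N (cmat (- M)) (- cid) (N - 1)) \<le> eigval f q w N (TK_A K) (TK_B K) (N - 1)"
      using F(3) h by blast
  next
    assume h: "f 0 * M $ 1 $ 2 < 0 \<and> M $ 1 $ 1 = 0"
    then have pos: "M $ 1 $ 1 - f 0 * M $ 1 $ 2 > 0" by simp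
    show "(\<forall>j<N. (even j \<longrightarrow> eigval f q w N (cmat M) (- cid) j < eigval f q w N (phase_mat \<gamma> M) (- cid) j \<and> eigval f q w N (phase_mat \<gamma> M) (- cid) j < eigval f q w N (cmat (- M)) (- cid) j)
                   \<and> (odd j \<longrightarrow> eigval f q w N (cmat (- M)) (- cid) j < eigval f q w N (phase_mat \<gamma> M) (- cid) j \<and> eigval f q w N (phase_mat \<gamma> M) (- cid) j < eigval f q w N (cmat M) (- cid) j))"
      using F(1)[OF pos] by blast
    show "\<forall>j. j + 2 \<le> N \<longrightarrow> max (eigval f q w N (cmat M) (- cid) j) (eigval f q w N (cmat (- M)) (- cid) j) \<le> eigval f q w N (TK_A K) (TK_B K) j \<and>
              eigval f q w N (TK_A K) (TK_B K) j \<le> min (eigval f q w N (cmat M) (- cid) (j + 1)) (eigval f q w N (cmat (- M)) (- cid) (j + 1))"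
      using F(4)[OF pos] h by blast
  qed
qed


end
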